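(* Let $U\subseteq L_{\mathrm{up}}$ be a set of up-links such that the sets $P_u$, $u\in U$, are pairwise disjoint, let $(C,A)$ be a (weakly) connected component of the dependency graph of $U$ (which is an arborescence), and let $k\in\mathbb{Z}_{\ge0}$. If for every directed path in $(C,A)$ with arc set $H\subseteq A$ we have $|\{u\in U\colon H\cap A_u\neq\emptyset\}|\le k$, then $C$ is $(k+1)$-thin.
   Context: Let $(G=(V,E),L,w)$ be a WTAP instance (spanning tree $G$, links $L\subseteq\binom V2$, weights $w>0$) with a fixed root $r\in V$, and let $F\subseteq L$ be a WTAP solution, i.e. $\bigcup_{\ell\in F}P_\ell=E$, where $P_\ell$ is the edge set of the tree path between the endpoints of $\ell$ and $V_\ell$ its vertex set. A link set $X$ is $k$-thin if every vertex of $V$ lies in $V_\ell$ for at most $k$ links $\ell\in X$. Ancestors of $v$ are the vertices on the $r$-$v$ path in $G$ (including $r$ and $v$); descendants are defined reciprocally. $\mathrm{apex}(\ell)$ is the vertex of $V_\ell$ closest to $r$. An up-link is a link $\{t,b\}$ with $t$ an ancestor of $b$; $L_{\mathrm{up}}$ is the set of up-links. For $v\in V$ let $B_v=\{\ell\in F\colon\mathrm{apex}(\ell)\text{ is a descendant of }v\}$. For an up-link $u=\{t,b\}$ with $t$ an ancestor of $b$, let $v_u$ be the ancestor of $t$ farthest from $r$ such that $P_u\subseteq\bigcup_{\ell\in B_{v_u}}P_\ell$, and fix $F_u\subseteq B_{v_u}$ inclusion-wise minimal with $P_u\subseteq\bigcup_{\ell\in F_u}P_\ell$. For $\ell\in F_u$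 let $P_{u,\ell}=P_u\setminus\bigcup_{\bar\ell\in F_u\setminus\{\ell\}}P_{\bar\ell}$; these sets are nonempty, pairwise disjoint, and each is the edge set of a path. Define $\ell_1\prec_u\ell_2$ iff the edges of $P_{u,\ell_1}$ appear before those of $P_{u,\ell_2}$ on the $t$-$b$ path in $G$. If $\ell_1\prec_u\cdots\prec_u\ell_q$ are the links of $F_u$, let $A_u=\{(\ell_i,\ell_{i+1})\colon i=1,\dots,q-1\}$. The dependency graph of $U\subseteq L_{\mathrm{up}}$ is the directed graph with vertex set $F$ whose arc set is the disjoint union of the $A_u$, $u\in U$. When the $P_u$, $u\in U$, are pairwise disjoint, this graph is a branching (no directed cycles, in-degrees at most one), so each weakly connected component is an arborescence. *)

theory Defs
  imports Complex_Main
begin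

definition edges_of :: "'a list \<Rightarrow> 'a set list" where
  "edges_of xs = map (\<lambda>(a,b). {a,b}) (zip xs (tl xs))"

definition is_path :: "'a set set \<Rightarrow> 'a \<Rightarrow> 'a \<Rightarrow> 'a list \<Rightarrow> bool" where
  "is_path E x y xs \<longleftrightarrow> xs \<noteq> [] \<and> hd xs = x \<and> last xs = y \<and> distinct xs \<and>
     set (edges_of xs) \<subseteq> E"

text \<open>(V,E) is a tree: a finite nonempty simple graph in which every two vertices
  are joined by exactly one simple path (i.e. connected and acyclic).\<close>
definition is_tree :: "'a set \<Rightarrow> 'a set set \<Rightarrow> bool" where
  "is_tree V E \<longleftrightarrow> finite V \<and> V \<noteq> {} \<and>
     E \<subseteq> {{a,b} | a b. a \<in> V \<and> b \<in> V \<and> a \<noteq> b} \<and>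
     (\<forall>x\<in>V. \<forall>y\<in>V. \<exists>!xs. is_path E x y xs)"

definition tpath :: "'a set set \<Rightarrow> 'a \<Rightarrow> 'a \<Rightarrow> 'a list" where
  "tpath E x y = (THE xs. is_path E x y xs)"

definition is_link :: "'a set \<Rightarrow> 'a set \<Rightarrow> bool" where
  "is_link V l \<longleftrightarrow> (\<exists>s t. l = {s,t} \<and> s \<in> V \<and> t \<in> V \<and> s \<noteq> t)"

definition Pl :: "'a set set \<Rightarrow> 'a set \<Rightarrow> 'a set set" where
  "Pl E l = \<Union>{set (edges_of (tpath E s t)) | s t. l = {s,t}}"

definition Vl :: "'a set set \<Rightarrow> 'a set \<Rightarrow> 'a set" where
  "Vl E l = \<Union>{set (tpath E s t) | s t. l = {s,t}}"

definition wtap_instance :: "'a set \<Rightarrow> 'a set set \<Rightarrow> 'a set set \<Rightarrow> ('a set \<Rightarrow> real) \<Rightarrow> bool" where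
  "wtap_instance V E L w \<longleftrightarrow> is_tree V E \<and> (\<forall>l\<in>L. is_link V l) \<and> (\<forall>l\<in>L. w l > 0)"

definition wtap_solution :: "'a set set \<Rightarrow> 'a set set \<Rightarrow> 'a set set \<Rightarrow> bool" where
  "wtap_solution E L F \<longleftrightarrow> F \<subseteq> L \<and> (\<Union>l\<in>F. Pl E l) = E"

definition thin :: "'a set \<Rightarrow> 'a set set \<Rightarrow> nat \<Rightarrow> 'a set set \<Rightarrow> bool" where
  "thin V E k X \<longleftrightarrow> (\<forall>v\<in>V. card {l\<in>X. v \<in> Vl E l} \<le> k)"

definition ancestor :: "'a set set \<Rightarrow> 'a \<Rightarrow> 'a \<Rightarrow> 'a \<Rightarrow> bool" where
  "ancestor E r a v \<longleftrightarrow> a \<in> set (tpath E r v)"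

definition depth :: "'a set set \<Rightarrow> 'a \<Rightarrow> 'a \<Rightarrow> nat" where
  "depth E r v = length (tpath E r v) - 1"

definition apex :: "'a set set \<Rightarrow> 'a \<Rightarrow> 'a set \<Rightarrow> 'a" where
  "apex E r l = (THE a. a \<in> Vl E l \<and> (\<forall>x\<in>Vl E l. depth E r a \<le> depth E r x))"

definition is_uplink :: "'a set set \<Rightarrow> 'a \<Rightarrow> 'a set \<Rightarrow> bool" where
  "is_uplink E r l \<longleftrightarrow> (\<exists>t b. l = {t,b} \<and> t \<noteq> b \<and> ancestor E r t b)"

definition Lup :: "'a set set \<Rightarrow> 'a \<Rightarrow> 'a set set \<Rightarrow> 'a set set" where
  "Lup E r L = {l\<in>L. is_uplink E r l}"

definition utop :: "'a set set \<Rightarrow> 'a \<Rightarrow> 'a set \<Rightarrow> 'a" where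
  "utop E r u = (THE t. \<exists>b. u = {t,b} \<and> t \<noteq> b \<and> ancestor E r t b)"

definition ubot :: "'a set set \<Rightarrow> 'a \<Rightarrow> 'a set \<Rightarrow> 'a" where
  "ubot E r u = (THE b. u = {utop E r u, b} \<and> utop E r u \<noteq> b \<and> ancestor E r (utop E r u) b)"

definition Bset :: "'a set set \<Rightarrow> 'a \<Rightarrow> 'a set set \<Rightarrow> 'a \<Rightarrow> 'a set set" where
  "Bset E r F v = {l\<in>F. ancestor E r v (apex E r l)}"

definition covers :: "'a set set \<Rightarrow> 'a set set \<Rightarrow> 'a set set \<Rightarrow> bool" where
  "covers E X S \<longleftrightarrow> S \<subseteq> (\<Union>l\<in>X. Pl E l)"

definition vu :: "'a set set \<Rightarrow> 'a \<Rightarrow> 'a set set \<Rightarrow> 'a set \<Rightarrow> 'a" where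
  "vu E r F u = (THE v. ancestor E r v (utop E r u) \<and> covers E (Bset E r F v) (Pl E u) \<and>
      (\<forall>x. ancestor E r x (utop E r u) \<and> covers E (Bset E r F x) (Pl E u) \<longrightarrow>
           depth E r x \<le> depth E r v))"

definition valid_Fsel :: "'a set set \<Rightarrow> 'a \<Rightarrow> 'a set set \<Rightarrow> 'a set set \<Rightarrow> ('a set \<Rightarrow> 'a set set) \<Rightarrow> bool" where
  "valid_Fsel E r F U Fs \<longleftrightarrow> (\<forall>u\<in>U.
      Fs u \<subseteq> Bset E r F (vu E r F u) \<and> covers E (Fs u) (Pl E u) \<and>
      (\<forall>X. X \<subset> Fs u \<longrightarrow> \<not> covers E X (Pl E u)))"

definition Pul :: "'a set set \<Rightarrow> ('a set \<Rightarrow> 'a set set) \<Rightarrow> 'a set \<Rightarrow> 'a set \<Rightarrow> 'a set set" where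
  "Pul E Fs u l = Pl E u - (\<Union>l'\<in>Fs u - {l}. Pl E l')"

definition prec_u :: "'a set set \<Rightarrow> 'a \<Rightarrow> ('a set \<Rightarrow> 'a set set) \<Rightarrow> 'a set \<Rightarrow> 'a set \<Rightarrow> 'a set \<Rightarrow> bool" where
  "prec_u E r Fs u l1 l2 \<longleftrightarrow>
     (let es = edges_of (tpath E (utop E r u) (ubot E r u)) in
      \<forall>i j. i < length es \<and> j < length es \<and> es ! i \<in> Pul E Fs u l1 \<and> es ! j \<in> Pul E Fs u l2
            \<longrightarrow> i < j)"

definition Au :: "'a set set \<Rightarrow> 'a \<Rightarrow> ('a set \<Rightarrow> 'a set set) \<Rightarrow> 'a set \<Rightarrow> ('a set \<times> 'a set) set" where
  "Au E r Fs u = {(l1,l2). l1 \<in> Fs u \<and> l2 \<in> Fs u \<and> l1 \<noteq> l2 \<and> prec_u E r Fs u l1 l2 \<and>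
      \<not>(\<exists>l3\<in>Fs u. l3 \<noteq> l1 \<and> l3 \<noteq> l2 \<and> prec_u E r Fs u l1 l3 \<and> prec_u E r Fs u l3 l2)}"

text \<open>Arcs of the dependency graph of U (vertex set F): disjoint union of the A_u,
  each arc labelled by its u, represented as (u, tail, head).\<close>
definition dep_arcs :: "'a set set \<Rightarrow> 'a \<Rightarrow> ('a set \<Rightarrow> 'a set set) \<Rightarrow> 'a set set \<Rightarrow> ('a set \<times> 'a set \<times> 'a set) set" where
  "dep_arcs E r Fs U = {(u,l1,l2). u \<in> U \<and> (l1,l2) \<in> Au E r Fs u}"

definition arc_rel :: "('b \<times> 'c \<times> 'c) set \<Rightarrow> ('c \<times> 'c) set" where
  "arc_rel D = {(x,y). \<exists>u. (u,x,y) \<in> D}"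

definition weak_component :: "'c set \<Rightarrow> ('b \<times> 'c \<times> 'c) set \<Rightarrow> 'c set \<Rightarrow> bool" where
  "weak_component F D C \<longleftrightarrow>
     (\<exists>x\<in>F. C = {y\<in>F. (x,y) \<in> (arc_rel D \<union> (arc_rel D)\<inverse>)\<^sup>*})"

definition comp_arcs :: "('b \<times> 'c \<times> 'c) set \<Rightarrow> 'c set \<Rightarrow> ('b \<times> 'c \<times> 'c) set" where
  "comp_arcs D C = {(u,x,y) \<in> D. x \<in> C \<and> y \<in> C}"

definition dipath :: "('b \<times> 'c \<times> 'c) set \<Rightarrow> ('b \<times> 'c \<times> 'c) list \<Rightarrow> bool" where
  "dipath A as \<longleftrightarrow> as \<noteq> [] \<and> set as \<subseteq> A \<and>
     (\<forall>i. Suc i < length as \<longrightarrow> snd (snd (as ! i)) = fst (snd (as ! Suc i))) \<and>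
     distinct (fst (snd (hd as)) # map (\<lambda>a. snd (snd a)) as)"

end

theory Submission
  imports Defs
begin

lemma edges_of_Nil[simp]: "edges_of [] = []" by (simp add: edges_of_def)
lemma edges_of_single[simp]: "edges_of [x] = []" by (simp add: edges_of_def)
lemma edges_of_Cons2[simp]: "edges_of (x#y#xs) = {x,y} # edges_of (y#xs)" by (simp add: edges_of_def)

lemma length_edges_of[simp]: "length (edges_of xs) = length xs - 1"
  by (simp add: edges_of_def)

lemma nth_edges_of: "Suc i < length xs \<Longrightarrow> edges_of xs ! i = {xs!i, xs!Suc i}"
  by (simp add: edges_of_def nth_tl)

lemma set_edges_of: "set (edges_of xs) = {{xs!i, xs!Suc i} | i. Suc i < length xs}"
proof (intro set_eqI iffI)
  fix e assume "e \<in> set (edges_of xs)"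
  then obtain i where "i < length (edges_of xs)" "e = edges_of xs ! i" by (auto simp: in_set_conv_nth)
  then have "Suc i < length xs" "e = {xs!i, xs!Suc i}" by (auto simp: nth_edges_of)
  then show "e \<in> {{xs!i, xs!Suc i} | i. Suc i < length xs}" by blast
next
  fix e assume "e \<in> {{xs!i, xs!Suc i} | i. Suc i < length xs}"
  then obtain i where i: "Suc i < length xs" "e = {xs!i, xs!Suc i}" by blast
  then have "i < length (edges_of xs)" "e = edges_of xs ! i" by (auto simp: nth_edges_of)
  then show "e \<in> set (edges_of xs)" by (auto simp: in_set_conv_nth)
qed

lemma edges_of_append: "edges_of (xs @ y # ys) = edges_of (xs @ [y]) @ edges_of (y # ys)"
proof (induction xs)
  case Nil then show ?case by simp
next
  case (Cons x xs)
  then show ?case by (cases xs) auto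
qed

lemma set_edges_of_rev: "set (edges_of (rev xs)) = set (edges_of xs)"
proof -
  have "{{rev xs!i, rev xs!Suc i} | i. Suc i < length xs} = {{xs!i, xs!Suc i} | i. Suc i < length xs}"
  proof (intro set_eqI iffI)
    fix e assume "e \<in> {{rev xs!i, rev xs!Suc i} | i. Suc i < length xs}"
    then obtain i where i: "Suc i < length xs" "e = {rev xs!i, rev xs!Suc i}" by auto
    define j where "j = length xs - Suc (Suc i)"
    have "Suc j < length xs" "e = {xs!j, xs!Suc j}" using i
      by (auto simp: rev_nth j_def Suc_diff_Suc)
    then show "e \<in> {{xs!i, xs!Suc i} | i. Suc i < length xs}" by blast
  next
    fix e assume "e \<in> {{xs!i, xs!Suc i} | i. Suc i < length xs}"
    then obtain i where i: "Suc i < length xs" "e = {xs!i, xs!Suc i}" by auto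
    define j where "j = length xs - Suc (Suc i)"
    have "Suc j < length xs" "e = {rev xs!j, rev xs!Suc j}" using i
      by (auto simp: rev_nth j_def Suc_diff_Suc)
    then show "e \<in> {{rev xs!i, rev xs!Suc i} | i. Suc i < length xs}" by blast
  qed
  then show ?thesis by (simp add: set_edges_of)
qed


lemma set_edges_of_take: "set (edges_of (take n xs)) \<subseteq> set (edges_of xs)"
  by (auto simp: set_edges_of)

lemma set_edges_of_drop: "set (edges_of (drop n xs)) \<subseteq> set (edges_of xs)"
proof
  fix e assume "e \<in> set (edges_of (drop n xs))"
  then obtain i where "Suc i < length (drop n xs)" "e = {drop n xs!i, drop n xs!Suc i}"
    by (auto simp: set_edges_of)
  then have "Suc (n+i) < length xs" "e = {xs!(n+i), xs!Suc (n+i)}" by auto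
  then show "e \<in> set (edges_of xs)" unfolding set_edges_of by blast
qed

lemma is_path_take:
  assumes "is_path E x y xs" "i < length xs"
  shows "is_path E x (xs!i) (take (Suc i) xs)"
proof -
  have tk: "take (Suc i) xs = take i xs @ [xs!i]" using assms(2) by (simp add: take_Suc_conv_app_nth)
  have "hd (take (Suc i) xs) = x" using assms by (auto simp: is_path_def)
  moreover have "last (take (Suc i) xs) = xs!i" using tk by simp
  ultimately show ?thesis using assms set_edges_of_take[of "Suc i" xs]
    by (auto simp: is_path_def)
qed

lemma is_path_drop:
  assumes "is_path E x y xs" "i < length xs"
  shows "is_path E (xs!i) y (drop i xs)"
  using assms set_edges_of_drop[of i xs]
  by (auto simp: is_path_def hd_drop_conv_nth)

lemma is_path_rev:
  assumes "is_path E x y xs" shows "is_path E y x (rev xs)"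
  using assms by (auto simp: is_path_def hd_rev last_rev set_edges_of_rev)



definition pe :: "'a set set \<Rightarrow> 'a \<Rightarrow> 'a \<Rightarrow> 'a set" where
  "pe E r w = {tpath E r w ! (depth E r w - 1), w}"

locale tctx =
  fixes V :: "'a set" and E :: "'a set set" and r :: 'a
  assumes tree: "is_tree V E" and rootV: "r \<in> V"
begin

abbreviation P where "P v \<equiv> tpath E r v"
abbreviation anc where "anc a v \<equiv> ancestor E r a v"
abbreviation dep where "dep v \<equiv> depth E r v"

lemma tree_unique: "x \<in> V \<Longrightarrow> y \<in> V \<Longrightarrow> \<exists>!xs. is_path E x y xs"
  using tree unfolding is_tree_def by blast

lemma edge_V: "{a,b} \<in> E \<Longrightarrow> a \<in> V \<and> b \<in> V"
proof -
  assume "{a,b} \<in> E"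
  then have "{a,b} \<in> {{a,b} | a b. a \<in> V \<and> b \<in> V \<and> a \<noteq> b}" using tree unfolding is_tree_def by blast
  then have "\<exists>c d. {a,b} = {c,d} \<and> c \<in> V \<and> d \<in> V" by blast
  then obtain c d where "{a,b} = {c,d}" "c \<in> V" "d \<in> V" by blast
  then show ?thesis by (auto simp: doubleton_eq_iff)
qed

lemma tpath_path: "x \<in> V \<Longrightarrow> y \<in> V \<Longrightarrow> is_path E x y (tpath E x y)"
  unfolding tpath_def by (rule theI', rule tree_unique)

lemma tpath_eq: "x \<in> V \<Longrightarrow> y \<in> V \<Longrightarrow> is_path E x y xs \<Longrightarrow> tpath E x y = xs"
  unfolding tpath_def by (rule the1_equality[OF tree_unique])

lemma path_V: assumes "is_path E x y xs" "x \<in> V" shows "set xs \<subseteq> V"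
proof
  fix z assume "z \<in> set xs"
  then obtain i where i: "i < length xs" "xs ! i = z" by (auto simp: in_set_conv_nth)
  have E: "set (edges_of xs) \<subseteq> E" using assms by (simp add: is_path_def)
  show "z \<in> V"
  proof (cases "Suc i < length xs")
    case True
    then have "{xs!i, xs!Suc i} \<in> E" using E by (auto simp: set_edges_of)
    then show ?thesis using edge_V i by auto
  next
    case False
    show ?thesis
    proof (cases i)
      case 0
      then show ?thesis using assms i by (auto simp: is_path_def hd_conv_nth)
    next
      case (Suc j)
      then have "Suc j < length xs" "xs ! Suc j = z" using i by auto
      then have "{xs!j, xs!Suc j} \<in> E" using E by (auto simp: set_edges_of)
      then show ?thesis using edge_V \<open>xs ! Suc j = z\<close> by auto
    qed
  qed
qed

lemma P_path: "v \<in> V \<Longrightarrow> is_path E r v (P v)"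
  using tpath_path rootV by blast

lemma P_take: assumes "v \<in> V" "i < length (P v)"
  shows "P (P v ! i) = take (Suc i) (P v)"
proof -
  have p: "is_path E r (P v ! i) (take (Suc i) (P v))" using is_path_take[OF P_path[OF assms(1)] assms(2)] .
  have "P v ! i \<in> V" using path_V[OF P_path[OF assms(1)] rootV] assms(2) by auto
  then show ?thesis using tpath_eq[OF rootV _ p] by simp
qed

lemma P_ne: "v \<in> V \<Longrightarrow> P v \<noteq> []" using P_path by (auto simp: is_path_def)

lemma len_P: "v \<in> V \<Longrightarrow> length (P v) = Suc (dep v)"
  using P_ne by (auto simp: depth_def)

lemma P_last: "v \<in> V \<Longrightarrow> P v ! dep v = v"
proof -
  assume v: "v \<in> V"
  have "last (P v) = v" using P_path[OF v] by (simp add: is_path_def)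
  then show ?thesis using P_ne[OF v] len_P[OF v] by (simp add: last_conv_nth)
qed

lemma P_hd: "v \<in> V \<Longrightarrow> P v ! 0 = r"
proof -
  assume v: "v \<in> V"
  have "hd (P v) = r" using P_path[OF v] by (simp add: is_path_def)
  then show ?thesis using P_ne[OF v] by (simp add: hd_conv_nth)
qed

lemma P_V: "v \<in> V \<Longrightarrow> set (P v) \<subseteq> V"
  using path_V[OF P_path rootV] by blast

lemma nth_anc: assumes "v \<in> V" "j \<le> dep v"
  shows "anc (P v ! j) v \<and> dep (P v ! j) = j \<and> P (P v ! j) = take (Suc j) (P v) \<and> P v ! j \<in> V"
proof -
  have j: "j < length (P v)" using assms len_P by auto
  then have t: "P (P v ! j) = take (Suc j) (P v)" using P_take assms by blast
  have "dep (P v ! j) = j" unfolding depth_def using t j by simp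
  then show ?thesis using t j P_V[OF assms(1)] by (auto simp: ancestor_def)
qed

lemma anc_char: assumes "v \<in> V" "anc a v"
  shows "a \<in> V \<and> dep a \<le> dep v \<and> P v ! dep a = a \<and> P a = take (Suc (dep a)) (P v)"
proof -
  obtain i where i: "i < length (P v)" "P v ! i = a" using assms by (auto simp: ancestor_def in_set_conv_nth)
  then have "i \<le> dep v" using len_P[OF assms(1)] by auto
  from nth_anc[OF assms(1) this] i \<open>i \<le> dep v\<close> show ?thesis by auto
qed

lemma anc_V: "v \<in> V \<Longrightarrow> anc a v \<Longrightarrow> a \<in> V" using anc_char by blast
lemma anc_dep_le: "v \<in> V \<Longrightarrow> anc a v \<Longrightarrow> dep a \<le> dep v" using anc_char by blast

lemma anc_refl: "v \<in> V \<Longrightarrow> anc v v"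
  using P_last nth_anc by fastforce

lemma anc_r: "v \<in> V \<Longrightarrow> anc r v"
  using P_hd nth_anc by fastforce

lemma dep_r: "dep r = 0"
proof -
  have "is_path E r r [r]" by (simp add: is_path_def)
  then have "P r = [r]" using tpath_eq rootV by blast
  then show ?thesis by (simp add: depth_def)
qed

lemma anc_trans: assumes "c \<in> V" "anc a b" "anc b c" shows "anc a c"
proof -
  have b: "b \<in> V" "P b = take (Suc (dep b)) (P c)" using anc_char[OF assms(1,3)] by auto
  then show ?thesis using assms(2) by (auto simp: ancestor_def dest: in_set_takeD)
qed

lemma anc_antisym: assumes "b \<in> V" "anc a b" "anc b a" shows "a = b"
proof -
  have a: "a \<in> V" using anc_V assms by blast
  have "dep a \<le> dep b" "dep b \<le> dep a" using anc_dep_le assms a by auto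
  then have "dep a = dep b" by simp
  have 1: "P b ! dep a = a" using anc_char[OF assms(1,2)] by blast
  have 2: "P b ! dep b = b" using P_last[OF assms(1)] .
  from 1 2 \<open>dep a = dep b\<close> show ?thesis by metis
qed

lemma anc_chain: assumes "v \<in> V" "anc a v" "anc b v" "dep a \<le> dep b" shows "anc a b"
proof -
  have a: "P v ! dep a = a" and b: "P v ! dep b = b" "P b = take (Suc (dep b)) (P v)"
    using anc_char assms by auto
  have "dep b < length (P v)" using anc_dep_le[OF assms(1,3)] len_P[OF assms(1)] by simp
  then have l: "dep a < length (take (Suc (dep b)) (P v))" using assms(4) by simp
  have "take (Suc (dep b)) (P v) ! dep a = a" using a assms(4) by simp
  then have "a \<in> set (take (Suc (dep b)) (P v))" using l nth_mem by metis
  then show ?thesis using b by (simp add: ancestor_def)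
qed

lemma anc_comp: "v \<in> V \<Longrightarrow> anc a v \<Longrightarrow> anc b v \<Longrightarrow> anc a b \<or> anc b a"
  using anc_chain nat_le_linear by blast

lemma anc_dep_eq: assumes "v \<in> V" "anc a v" "anc b v" "dep a = dep b" shows "a = b"
proof -
  have 1: "P v ! dep a = a" using anc_char[OF assms(1,2)] by blast
  have 2: "P v ! dep b = b" using anc_char[OF assms(1,3)] by blast
  from 1 2 assms(4) show ?thesis by metis
qed

lemma anc_less: assumes "b \<in> V" "anc a b" "a \<noteq> b" shows "dep a < dep b"
proof -
  have "dep a \<le> dep b" using anc_dep_le assms by blast
  moreover have "dep a \<noteq> dep b" using anc_dep_eq[OF assms(1,2) anc_refl[OF assms(1)]] assms(3) by blast
  ultimately show ?thesis by simp
qed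

lemma dep0: assumes "v \<in> V" "dep v = 0" shows "v = r"
proof -
  have 1: "P v ! dep v = v" using P_last assms by blast
  have 2: "P v ! 0 = r" using P_hd assms by blast
  from 1 2 assms(2) show ?thesis by metis
qed

lemma par_props: assumes "w \<in> V" "w \<noteq> r"
  shows "anc (P w ! (dep w - 1)) w \<and> dep (P w ! (dep w - 1)) = dep w - 1 \<and> 1 \<le> dep w"
  using nth_anc[OF assms(1), of "dep w - 1"] dep0 assms by (cases "dep w") auto

lemma pe_inj: "inj_on (pe E r) (V - {r})"
proof
  fix w w' assume w: "w \<in> V - {r}" and w': "w' \<in> V - {r}" and eq: "pe E r w = pe E r w'"
  show "w = w'"
  proof (rule ccontr)
    assume ne: "w \<noteq> w'"
    from eq have "{P w ! (dep w - 1), w} = {P w' ! (dep w' - 1), w'}" by (simp add: pe_def)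
    then have e1: "w = P w' ! (dep w' - 1)" and e2: "w' = P w ! (dep w - 1)" using ne by (auto simp: doubleton_eq_iff)
    have p1: "dep (P w' ! (dep w' - 1)) = dep w' - 1" "1 \<le> dep w'" using par_props w' by auto
    have p2: "dep (P w ! (dep w - 1)) = dep w - 1" "1 \<le> dep w" using par_props w by auto
    have "dep w = dep w' - 1" using p1 e1 by simp
    moreover have "dep w' = dep w - 1" using p2 e2 by simp
    ultimately show False using p1 p2 by simp
  qed
qed

lemma edges_drop: assumes v: "v \<in> V"
  shows "set (edges_of (drop d (P v))) = pe E r ` {w. anc w v \<and> d < dep w}"
proof (intro set_eqI iffI)
  fix e assume "e \<in> set (edges_of (drop d (P v)))"
  then obtain i where i: "Suc i < length (drop d (P v))" "e = {drop d (P v) ! i, drop d (P v) ! Suc i}"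
    by (auto simp: set_edges_of)
  define w where "w = P v ! Suc (d + i)"
  have le: "Suc (d+i) \<le> dep v" using i len_P[OF v] by auto
  from nth_anc[OF v le] have w: "anc w v" "dep w = Suc (d+i)" "P w = take (Suc (Suc (d+i))) (P v)"
    by (auto simp: w_def)
  have "pe E r w = e" using i w by (simp add: pe_def w_def)
  moreover have "anc w v \<and> d < dep w" using w by simp
  ultimately show "e \<in> pe E r ` {w. anc w v \<and> d < dep w}" by blast
next
  fix e assume "e \<in> pe E r ` {w. anc w v \<and> d < dep w}"
  then obtain w where w: "anc w v" "d < dep w" "e = pe E r w" by blast
  have c: "P v ! dep w = w" "P w = take (Suc (dep w)) (P v)" "dep w \<le> dep v" using anc_char[OF v w(1)] by auto
  define i where "i = dep w - Suc d"
  have i: "Suc i < length (drop d (P v))" using c w len_P[OF v] by (auto simp: i_def)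
  have "e = {drop d (P v) ! i, drop d (P v) ! Suc i}"
    using w c i by (auto simp: pe_def i_def Suc_diff_Suc)
  then show "e \<in> set (edges_of (drop d (P v)))" using i by (auto simp: set_edges_of)
qed

end


definition lca :: "'a set set \<Rightarrow> 'a \<Rightarrow> 'a \<Rightarrow> 'a \<Rightarrow> 'a" where
  "lca E r s t = (THE m. ancestor E r m s \<and> ancestor E r m t \<and>
      (\<forall>c. ancestor E r c s \<and> ancestor E r c t \<longrightarrow> ancestor E r c m))"

definition Qv :: "'a set set \<Rightarrow> 'a \<Rightarrow> 'a set \<Rightarrow> 'a set" where
  "Qv E r l = Vl E l - {apex E r l}"

context tctx begin

lemma lca_ex: assumes s: "s \<in> V" and t: "t \<in> V"
  shows "\<exists>m. anc m s \<and> anc m t \<and> (\<forall>c. anc c s \<and> anc c t \<longrightarrow> anc c m)"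
proof -
  define M where "M = {m. anc m s \<and> anc m t}"
  have fin: "finite M" unfolding M_def ancestor_def by (rule finite_subset[of _ "set (P s)"]) auto
  have ne: "r \<in> M" using anc_r s t by (simp add: M_def)
  define d where "d = Max (dep ` M)"
  have "d \<in> dep ` M" unfolding d_def using fin ne by (intro Max_in) auto
  then obtain m where m: "m \<in> M" "dep m = d" by blast
  have mx: "\<And>c. c \<in> M \<Longrightarrow> dep c \<le> dep m" using fin m unfolding d_def by auto
  have "\<forall>c. anc c s \<and> anc c t \<longrightarrow> anc c m"
  proof (intro allI impI)
    fix c assume c: "anc c s \<and> anc c t"
    then have cM: "c \<in> M" by (simp add: M_def)
    have ms: "anc m s" using m by (simp add: M_def)
    have mV: "m \<in> V" using anc_V[OF s ms] .
    show "anc c m"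
    proof (cases "anc c m")
      case False
      then have "anc m c" using anc_comp[OF s ms] c by blast
      then have "dep m \<le> dep c" using anc_dep_le c anc_V s by blast
      then have "dep c = dep m" using mx[OF cM] by simp
      then have "c = m" using anc_dep_eq[OF s] c ms by blast
      then show ?thesis using anc_refl mV by blast
    qed
  qed
  then show ?thesis using m by (auto simp: M_def)
qed

lemma lca_props: assumes s: "s \<in> V" and t: "t \<in> V"
  shows "anc (lca E r s t) s \<and> anc (lca E r s t) t \<and> (\<forall>c. anc c s \<and> anc c t \<longrightarrow> anc c (lca E r s t))"
proof -
  have "\<exists>!m. anc m s \<and> anc m t \<and> (\<forall>c. anc c s \<and> anc c t \<longrightarrow> anc c m)"
  proof (rule ex_ex1I)
    show "\<exists>m. anc m s \<and> anc m t \<and> (\<forall>c. anc c s \<and> anc c t \<longrightarrow> anc c m)" using lca_ex s t .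
  next
    fix m1 m2 assume 1: "anc m1 s \<and> anc m1 t \<and> (\<forall>c. anc c s \<and> anc c t \<longrightarrow> anc c m1)"
      and 2: "anc m2 s \<and> anc m2 t \<and> (\<forall>c. anc c s \<and> anc c t \<longrightarrow> anc c m2)"
    then have "anc m1 m2" "anc m2 m1" by auto
    moreover have "m2 \<in> V" using anc_V s 2 by blast
    ultimately show "m1 = m2" using anc_antisym by blast
  qed
  then show ?thesis unfolding lca_def by (rule theI')
qed

lemma lca_sym: "lca E r s t = lca E r t s"
proof -
  have "(\<lambda>m. anc m s \<and> anc m t \<and> (\<forall>c. anc c s \<and> anc c t \<longrightarrow> anc c m)) =
        (\<lambda>m. anc m t \<and> anc m s \<and> (\<forall>c. anc c t \<and> anc c s \<longrightarrow> anc c m))" by (rule ext) blast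
  then show ?thesis unfolding lca_def by simp
qed

lemma set_drop_P: assumes v: "v \<in> V" and m: "anc m v"
  shows "set (drop (dep m) (P v)) = {w. anc w v \<and> anc m w}"
proof (intro set_eqI iffI)
  fix w assume "w \<in> set (drop (dep m) (P v))"
  then obtain i where i: "i < length (drop (dep m) (P v))" "drop (dep m) (P v) ! i = w"
    by (auto simp: in_set_conv_nth)
  have le: "dep m + i \<le> dep v" using i len_P[OF v] by simp
  have w: "P v ! (dep m + i) = w" using i by simp
  from nth_anc[OF v le] w have wa: "anc w v" "dep w = dep m + i" by auto
  have "anc m w" using anc_chain[OF v m wa(1)] wa(2) by simp
  then show "w \<in> {w. anc w v \<and> anc m w}" using wa by simp
next
  fix w assume "w \<in> {w. anc w v \<and> anc m w}"
  then have w: "anc w v" "anc m w" by auto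
  have wV: "w \<in> V" using anc_V v w by blast
  have c: "P v ! dep w = w" "dep w \<le> dep v" using anc_char[OF v w(1)] by auto
  have mw: "dep m \<le> dep w" using anc_dep_le[OF wV w(2)] .
  have "drop (dep m) (P v) ! (dep w - dep m) = w" using c mw len_P[OF v] by simp
  moreover have "dep w - dep m < length (drop (dep m) (P v))" using c mw len_P[OF v] by simp
  ultimately show "w \<in> set (drop (dep m) (P v))" by (metis nth_mem)
qed

lemma edges_drop_P: assumes v: "v \<in> V" and m: "anc m v"
  shows "set (edges_of (drop (dep m) (P v))) = pe E r ` {w. anc w v \<and> anc m w \<and> w \<noteq> m}"
proof -
  have "{w. anc w v \<and> dep m < dep w} = {w. anc w v \<and> anc m w \<and> w \<noteq> m}"
  proof (intro set_eqI iffI)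
    fix w assume "w \<in> {w. anc w v \<and> dep m < dep w}"
    then have w: "anc w v" "dep m < dep w" by auto
    then have "anc m w" using anc_chain[OF v m w(1)] by simp
    then show "w \<in> {w. anc w v \<and> anc m w \<and> w \<noteq> m}" using w by auto
  next
    fix w assume "w \<in> {w. anc w v \<and> anc m w \<and> w \<noteq> m}"
    then have w: "anc w v" "anc m w" "w \<noteq> m" by auto
    have wV: "w \<in> V" using anc_V v w by blast
    have "dep m < dep w" using anc_less[OF wV w(2)] w(3) by simp
    then show "w \<in> {w. anc w v \<and> dep m < dep w}" using w by simp
  qed
  then show ?thesis using edges_drop[OF v, of "dep m"] by simp
qed

lemma tpath_char: assumes s: "s \<in> V" and t: "t \<in> V"
  shows "set (tpath E s t) = {v. anc (lca E r s t) v \<and> (anc v s \<or> anc v t)} \<and>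
         set (edges_of (tpath E s t)) = pe E r ` {v. anc (lca E r s t) v \<and> v \<noteq> lca E r s t \<and> (anc v s \<or> anc v t)}"
proof -
  define m where "m = lca E r s t"
  have ms: "anc m s" and mt: "anc m t" and mc: "\<And>c. anc c s \<Longrightarrow> anc c t \<Longrightarrow> anc c m"
    using lca_props[OF s t] by (auto simp: m_def)
  have mV: "m \<in> V" using anc_V s ms by blast
  define A where "A = drop (dep m) (P s)"
  define B where "B = drop (dep m) (P t)"
  have lA: "dep m < length (P s)" using anc_dep_le[OF s ms] len_P[OF s] by simp
  have lB: "dep m < length (P t)" using anc_dep_le[OF t mt] len_P[OF t] by simp
  have pA: "is_path E m s A" using is_path_drop[OF P_path[OF s] lA] anc_char[OF s ms] by (simp add: A_def)
  have pB: "is_path E m t B" using is_path_drop[OF P_path[OF t] lB] anc_char[OF t mt] by (simp add: B_def)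
  have sA: "set A = {w. anc w s \<and> anc m w}" using set_drop_P[OF s ms] by (simp add: A_def)
  have sB: "set B = {w. anc w t \<and> anc m w}" using set_drop_P[OF t mt] by (simp add: B_def)
  have eA: "set (edges_of A) = pe E r ` {w. anc w s \<and> anc m w \<and> w \<noteq> m}" using edges_drop_P[OF s ms] by (simp add: A_def)
  have eB: "set (edges_of B) = pe E r ` {w. anc w t \<and> anc m w \<and> w \<noteq> m}" using edges_drop_P[OF t mt] by (simp add: B_def)
  have Bne: "B \<noteq> []" and hB: "hd B = m" and lastB: "last B = t" and dB: "distinct B"
    using pB by (auto simp: is_path_def)
  have Ane: "A \<noteq> []" and hA: "hd A = m" and lastA: "last A = s" and dA: "distinct A"
    using pA by (auto simp: is_path_def)
  have Bc: "B = m # tl B" using Bne hB by (cases B) auto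
  have sB2: "set B = insert m (set (tl B))" using Bne hB by (cases B) auto
  have dtl: "distinct (m # tl B)" using dB Bne hB by (cases B) auto
  then have mtl: "m \<notin> set (tl B)" by simp
  have disj: "set A \<inter> set (tl B) = {}"
  proof -
    have "set A \<inter> set B \<subseteq> {m}"
    proof
      fix z assume "z \<in> set A \<inter> set B"
      then have "anc z s" "anc z t" "anc m z" using sA sB by auto
      then have "anc z m" "anc m z" using mc by auto
      then show "z \<in> {m}" using anc_antisym mV by blast
    qed
    moreover have "set (tl B) \<subseteq> set B" using sB2 by blast
    ultimately show ?thesis using mtl by blast
  qed
  define xs where "xs = rev A @ tl B"
  have lrA: "last (rev A) = m" using Ane hA by (simp add: last_rev)
  have rA: "rev A = butlast (rev A) @ [m]"
    using append_butlast_last_id[of "rev A"] Ane lrA by simp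
  have xs2: "xs = butlast (rev A) @ m # tl B" unfolding xs_def by (subst rA) simp
  have eB2: "edges_of (m # tl B) = edges_of B" using Bne hB by (cases B) auto
  have exs: "edges_of xs = edges_of (rev A) @ edges_of B"
    unfolding xs2 edges_of_append rA[symmetric] eB2 ..
  have EA: "set (edges_of A) \<subseteq> E" and EB: "set (edges_of B) \<subseteq> E"
    using pA pB by (auto simp: is_path_def)
  have pxs: "is_path E s t xs"
    unfolding is_path_def
  proof (intro conjI)
    show "xs \<noteq> []" using Ane by (simp add: xs_def)
    show "hd xs = s" using Ane lastA by (simp add: xs_def hd_rev)
    show "last xs = t"
    proof (cases "tl B = []")
      case True
      have "B = [m]" by (rule Bc[unfolded True])
      then have "t = m" using lastB by simp
      then show ?thesis using True Ane hA by (simp add: xs_def last_rev)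
    next
      case False
      then have "last (tl B) = last B" using Bne hB by (cases B) auto
      then show ?thesis using False lastB by (simp add: xs_def)
    qed
    show "distinct xs" using dA dtl disj unfolding xs_def by simp
    show "set (edges_of xs) \<subseteq> E" using exs EA EB set_edges_of_rev[of A] by auto
  qed
  have tp: "tpath E s t = xs" using tpath_eq[OF s t pxs] .
  have "m \<in> set A" using hA Ane hd_in_set by blast
  then have "set xs = set A \<union> set B" using sB2 unfolding xs_def by auto
  then have 1: "set (tpath E s t) = {v. anc m v \<and> (anc v s \<or> anc v t)}" using tp sA sB by auto
  have "set (edges_of xs) = set (edges_of A) \<union> set (edges_of B)" using exs set_edges_of_rev[of A] by simp
  then have 2: "set (edges_of (tpath E s t)) = pe E r ` {v. anc m v \<and> v \<noteq> m \<and> (anc v s \<or> anc v t)}"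
    using tp eA eB by auto
  from 1 2 show ?thesis by (simp add: m_def)
qed

end


context tctx begin

lemma pairs_eq: "s \<noteq> t \<Longrightarrow> {(s',t'). {s,t} = {s',t'}} = {(s,t),(t,s)}"
  by (auto simp: doubleton_eq_iff)

lemma link_VP: assumes s: "s \<in> V" and t: "t \<in> V" and st: "s \<noteq> t"
  shows "Vl E {s,t} = {v. anc (lca E r s t) v \<and> (anc v s \<or> anc v t)} \<and>
         Pl E {s,t} = pe E r ` {v. anc (lca E r s t) v \<and> v \<noteq> lca E r s t \<and> (anc v s \<or> anc v t)}"
proof -
  have c1: "set (tpath E s t) = {v. anc (lca E r s t) v \<and> (anc v s \<or> anc v t)}"
    and c2: "set (edges_of (tpath E s t)) = pe E r ` {v. anc (lca E r s t) v \<and> v \<noteq> lca E r s t \<and> (anc v s \<or> anc v t)}"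
    using tpath_char[OF s t] by auto
  have c3: "set (tpath E t s) = {v. anc (lca E r s t) v \<and> (anc v s \<or> anc v t)}"
    and c4: "set (edges_of (tpath E t s)) = pe E r ` {v. anc (lca E r s t) v \<and> v \<noteq> lca E r s t \<and> (anc v s \<or> anc v t)}"
    using tpath_char[OF t s] lca_sym[of t s] by auto
  have fam1: "{set (tpath E s' t') | s' t'. {s,t} = {s',t'}} = {set (tpath E s t), set (tpath E t s)}"
    using st by (auto simp: doubleton_eq_iff)
  have fam2: "{set (edges_of (tpath E s' t')) | s' t'. {s,t} = {s',t'}} = {set (edges_of (tpath E s t)), set (edges_of (tpath E t s))}"
    using st by (auto simp: doubleton_eq_iff)
  show ?thesis unfolding Vl_def Pl_def fam1 fam2 using c1 c2 c3 c4 by simp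
qed

lemma apex_link: assumes s: "s \<in> V" and t: "t \<in> V" and st: "s \<noteq> t"
  shows "apex E r {s,t} = lca E r s t"
proof -
  define m where "m = lca E r s t"
  have VL: "Vl E {s,t} = {v. anc m v \<and> (anc v s \<or> anc v t)}" using link_VP[OF s t st] by (simp add: m_def)
  have ms: "anc m s" and mt: "anc m t" using lca_props[OF s t] by (auto simp: m_def)
  have mV: "m \<in> V" using anc_V s ms by blast
  have xV: "\<And>x. x \<in> Vl E {s,t} \<Longrightarrow> x \<in> V \<and> anc m x"
    using VL anc_V s t by blast
  have "\<exists>!a. a \<in> Vl E {s,t} \<and> (\<forall>x\<in>Vl E {s,t}. dep a \<le> dep x)"
  proof (rule ex1I)
    show "m \<in> Vl E {s,t} \<and> (\<forall>x\<in>Vl E {s,t}. dep m \<le> dep x)"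
      using VL anc_refl[OF mV] ms xV anc_dep_le by blast
  next
    fix a assume a: "a \<in> Vl E {s,t} \<and> (\<forall>x\<in>Vl E {s,t}. dep a \<le> dep x)"
    have m1: "m \<in> Vl E {s,t}" using VL anc_refl[OF mV] ms by blast
    have aV: "a \<in> V" "anc m a" using xV a by auto
    have "dep a \<le> dep m" using a m1 by blast
    moreover have "dep m \<le> dep a" using anc_dep_le aV by blast
    ultimately have "dep a = dep m" by simp
    then show "a = m" using anc_dep_eq[OF aV(1) anc_refl[OF aV(1)] aV(2)] by simp
  qed
  moreover have "m \<in> Vl E {s,t} \<and> (\<forall>x\<in>Vl E {s,t}. dep m \<le> dep x)"
    using VL anc_refl[OF mV] ms xV anc_dep_le by blast
  ultimately show ?thesis unfolding apex_def m_def[symmetric] by (rule the1_equality)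
qed

lemma link_obtain: assumes "is_link V l"
  obtains s t where "l = {s,t}" "s \<in> V" "t \<in> V" "s \<noteq> t"
  using assms by (auto simp: is_link_def)

lemma link_props: assumes l: "is_link V l"
  shows "apex E r l \<in> V"
    and "apex E r l \<in> Vl E l"
    and "\<And>x. x \<in> Vl E l \<Longrightarrow> anc (apex E r l) x \<and> x \<in> V"
    and "\<And>x w. x \<in> Vl E l \<Longrightarrow> anc (apex E r l) w \<Longrightarrow> w \<noteq> apex E r l \<Longrightarrow> anc w x \<Longrightarrow> w \<in> Qv E r l"
    and "\<And>w. w \<in> Qv E r l \<Longrightarrow> anc (apex E r l) w \<and> w \<noteq> apex E r l \<and> w \<in> Vl E l"
    and "Pl E l = pe E r ` Qv E r l"
    and "Qv E r l \<subseteq> V - {r}"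
proof -
  obtain s t where st: "l = {s,t}" "s \<in> V" "t \<in> V" "s \<noteq> t" using link_obtain[OF l] by blast
  define m where "m = lca E r s t"
  have ap: "apex E r l = m" using apex_link[OF st(2-4)] st(1) by (simp add: m_def)
  have VL: "Vl E l = {v. anc m v \<and> (anc v s \<or> anc v t)}"
    and PL: "Pl E l = pe E r ` {v. anc m v \<and> v \<noteq> m \<and> (anc v s \<or> anc v t)}"
    using link_VP[OF st(2-4)] st(1) by (auto simp: m_def)
  have ms: "anc m s" and mt: "anc m t" using lca_props[OF st(2,3)] by (auto simp: m_def)
  have mV: "m \<in> V" using anc_V st(2) ms by blast
  have xV: "\<And>x. x \<in> Vl E l \<Longrightarrow> x \<in> V" using VL anc_V st(2,3) by blast
  have Q: "Qv E r l = {v. anc m v \<and> v \<noteq> m \<and> (anc v s \<or> anc v t)}"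
    unfolding Qv_def ap VL by auto
  show "apex E r l \<in> V" using ap mV by simp
  show "apex E r l \<in> Vl E l" using ap VL anc_refl[OF mV] ms by simp
  show "\<And>x. x \<in> Vl E l \<Longrightarrow> anc (apex E r l) x \<and> x \<in> V" using ap VL xV by auto
  show "\<And>x w. x \<in> Vl E l \<Longrightarrow> anc (apex E r l) w \<Longrightarrow> w \<noteq> apex E r l \<Longrightarrow> anc w x \<Longrightarrow> w \<in> Qv E r l"
  proof -
    fix x w assume x: "x \<in> Vl E l" and w: "anc (apex E r l) w" "w \<noteq> apex E r l" "anc w x"
    have "anc x s \<or> anc x t" using x VL by simp
    then have "anc w s \<or> anc w t" using anc_trans st(2,3) w(3) by blast
    then show "w \<in> Qv E r l" using Q w ap by simp
  qed
  show "\<And>w. w \<in> Qv E r l \<Longrightarrow> anc (apex E r l) w \<and> w \<noteq> apex E r l \<and> w \<in> Vl E l"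
    using Q ap VL by auto
  show "Pl E l = pe E r ` Qv E r l" using PL Q by simp
  show "Qv E r l \<subseteq> V - {r}"
  proof
    fix w assume w: "w \<in> Qv E r l"
    then have w1: "anc m w" "w \<noteq> m" "w \<in> V" using Q xV unfolding Qv_def by auto
    have "w \<noteq> r"
    proof
      assume "w = r"
      then have "anc w m" using anc_r mV by simp
      then show False using anc_antisym[OF mV] w1 by blast
    qed
    then show "w \<in> V - {r}" using w1 by simp
  qed
qed

lemma Pl_sub_E: assumes l: "is_link V l" shows "Pl E l \<subseteq> E"
proof -
  obtain s t where st: "l = {s,t}" "s \<in> V" "t \<in> V" "s \<noteq> t" using link_obtain[OF l] by blast
  have fam2: "{set (edges_of (tpath E s' t')) | s' t'. {s,t} = {s',t'}} = {set (edges_of (tpath E s t)), set (edges_of (tpath E t s))}"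
    using st by (auto simp: doubleton_eq_iff)
  have "set (edges_of (tpath E s t)) \<subseteq> E" "set (edges_of (tpath E t s)) \<subseteq> E"
    using tpath_path st by (auto simp: is_path_def)
  then show ?thesis unfolding Pl_def st(1) fam2 by auto
qed

lemma uplink_props: assumes l: "is_link V u" and up: "is_uplink E r u"
  shows "anc (utop E r u) (ubot E r u)" "utop E r u \<noteq> ubot E r u" "u = {utop E r u, ubot E r u}"
    "utop E r u \<in> V" "ubot E r u \<in> V" "apex E r u = utop E r u"
    "Qv E r u = {w. anc (utop E r u) w \<and> w \<noteq> utop E r u \<and> anc w (ubot E r u)}"
    "tpath E (utop E r u) (ubot E r u) = drop (dep (utop E r u)) (P (ubot E r u))"
proof -
  obtain t b where tb: "u = {t,b}" "t \<noteq> b" "anc t b" using up by (auto simp: is_uplink_def)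
  obtain s1 s2 where ss: "u = {s1,s2}" "s1 \<in> V" "s2 \<in> V" using link_obtain[OF l] by blast
  have bV: "b \<in> V" using tb ss by (auto simp: doubleton_eq_iff)
  have tV: "t \<in> V" using anc_V bV tb by blast
  have ut: "utop E r u = t"
    unfolding utop_def
  proof (rule the1_equality)
    show "\<exists>b'. u = {t,b'} \<and> t \<noteq> b' \<and> anc t b'" using tb by blast
    show "\<exists>!t'. \<exists>b'. u = {t',b'} \<and> t' \<noteq> b' \<and> anc t' b'"
    proof (rule ex1I)
      show "\<exists>b'. u = {t,b'} \<and> t \<noteq> b' \<and> anc t b'" using tb by blast
    next
      fix t' assume "\<exists>b'. u = {t',b'} \<and> t' \<noteq> b' \<and> anc t' b'"
      then obtain b' where b': "{t,b} = {t',b'}" "t' \<noteq> b'" "anc t' b'" using tb by auto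
      show "t' = t"
      proof (rule ccontr)
        assume "t' \<noteq> t"
        then have "t' = b" "b' = t" using b' by (auto simp: doubleton_eq_iff)
        then have "anc b t" using b' by simp
        then show False using anc_antisym[OF bV tb(3)] tb(2) by blast
      qed
    qed
  qed
  have ub: "ubot E r u = b"
    unfolding ubot_def ut
  proof (rule the1_equality)
    show "u = {t,b} \<and> t \<noteq> b \<and> anc t b" using tb by blast
    show "\<exists>!b'. u = {t,b'} \<and> t \<noteq> b' \<and> anc t b'"
    proof (rule ex1I)
      show "u = {t,b} \<and> t \<noteq> b \<and> anc t b" using tb by blast
    next
      fix b' assume "u = {t,b'} \<and> t \<noteq> b' \<and> anc t b'"
      then show "b' = b" using tb by (auto simp: doubleton_eq_iff)
    qed
  qed
  have lc: "lca E r t b = t"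
  proof -
    have "anc (lca E r t b) t" "anc t (lca E r t b)" using lca_props[OF tV bV] tb anc_refl[OF tV] by auto
    then show ?thesis using anc_antisym[OF tV] by blast
  qed
  have ap: "apex E r u = t" using apex_link[OF tV bV tb(2)] lc tb(1) by simp
  have VL: "Vl E u = {v. anc t v \<and> (anc v t \<or> anc v b)}" using link_VP[OF tV bV tb(2)] lc tb(1) by simp
  have "Qv E r u = {w. anc t w \<and> w \<noteq> t \<and> anc w b}"
  proof -
    have "\<And>w. anc t w \<Longrightarrow> anc w t \<Longrightarrow> w = t" using anc_antisym[OF tV] by blast
    then show ?thesis unfolding Qv_def ap VL by auto
  qed
  moreover have "tpath E t b = drop (dep t) (P b)"
  proof -
    have l1: "dep t < length (P b)" using anc_dep_le[OF bV tb(3)] len_P[OF bV] by simp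
    have "is_path E t b (drop (dep t) (P b))"
      using is_path_drop[OF P_path[OF bV] l1] anc_char[OF bV tb(3)] by simp
    then show ?thesis using tpath_eq[OF tV bV] by blast
  qed
  ultimately show "anc (utop E r u) (ubot E r u)" "utop E r u \<noteq> ubot E r u" "u = {utop E r u, ubot E r u}"
    "utop E r u \<in> V" "ubot E r u \<in> V" "apex E r u = utop E r u"
    "Qv E r u = {w. anc (utop E r u) w \<and> w \<noteq> utop E r u \<and> anc w (ubot E r u)}"
    "tpath E (utop E r u) (ubot E r u) = drop (dep (utop E r u)) (P (ubot E r u))"
    using ut ub tb tV bV ap by auto
qed

end


definition Exc :: "'a set set \<Rightarrow> 'a \<Rightarrow> ('a set \<Rightarrow> 'a set set) \<Rightarrow> 'a set \<Rightarrow> 'a set \<Rightarrow> 'a set" where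
  "Exc E r Fs u l = Qv E r u - \<Union>((Qv E r) ` (Fs u - {l}))"

context tctx begin

lemma nth_edges_drop: assumes v: "v \<in> V" and i: "Suc (d+i) \<le> dep v"
  shows "edges_of (drop d (P v)) ! i = pe E r (P v ! Suc (d+i))"
proof -
  have l: "Suc i < length (drop d (P v))" using i len_P[OF v] by simp
  from nth_anc[OF v i] have w: "dep (P v ! Suc (d+i)) = Suc (d+i)" "P (P v ! Suc (d+i)) = take (Suc (Suc (d+i))) (P v)"
    by auto
  have dl: "d \<le> length (P v)" using i len_P[OF v] by simp
  have "edges_of (drop d (P v)) ! i = {P v ! (d+i), P v ! Suc (d+i)}"
    using nth_edges_of[OF l] dl by (simp add: nth_drop)
  then show ?thesis using w by (simp add: pe_def)
qed

end

locale prob = tctx V E r for V :: "'a set" and E r +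
  fixes L F U :: "'a set set" and Fs :: "'a set \<Rightarrow> 'a set set"
  assumes links: "\<forall>l\<in>L. is_link V l"
  and sol: "wtap_solution E L F"
  and Fsel: "valid_Fsel E r F U Fs"
  and Uup: "U \<subseteq> Lup E r L"
  and disj: "\<forall>u1\<in>U. \<forall>u2\<in>U. u1 \<noteq> u2 \<longrightarrow> Pl E u1 \<inter> Pl E u2 = {}"
begin

abbreviation ap where "ap l \<equiv> apex E r l"
abbreviation Q where "Q l \<equiv> Qv E r l"
abbreviation tu where "tu u \<equiv> utop E r u"
abbreviation bu where "bu u \<equiv> ubot E r u"
abbreviation Xc where "Xc u l \<equiv> Exc E r Fs u l"

lemma F_L: "F \<subseteq> L" using sol unfolding wtap_solution_def by blast

lemma F_link: "l \<in> F \<Longrightarrow> is_link V l"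
  using F_L links by blast

lemma U_link: "u \<in> U \<Longrightarrow> is_link V u \<and> is_uplink E r u"
  using Uup links unfolding Lup_def by blast

lemma Fsel_u: "u \<in> U \<Longrightarrow> Fs u \<subseteq> Bset E r F (vu E r F u) \<and> covers E (Fs u) (Pl E u) \<and> (\<forall>X. X \<subset> Fs u \<longrightarrow> \<not> covers E X (Pl E u))"
  using Fsel unfolding valid_Fsel_def by blast

lemma Fs_F: "u \<in> U \<Longrightarrow> Fs u \<subseteq> F"
  using Fsel_u unfolding Bset_def by blast

lemma Fs_vu: "u \<in> U \<Longrightarrow> l \<in> Fs u \<Longrightarrow> anc (vu E r F u) (ap l)"
  using Fsel_u unfolding Bset_def by blast

lemma covers_iff: assumes u: "is_link V u" and X: "X \<subseteq> F"
  shows "covers E X (Pl E u) \<longleftrightarrow> Q u \<subseteq> \<Union>(Q ` X)"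
proof -
  have PU: "Pl E u = pe E r ` Q u" using link_props(6)[OF u] .
  have PX: "\<And>l. l \<in> X \<Longrightarrow> Pl E l = pe E r ` Q l" using link_props(6) F_link X by blast
  have QU: "Q u \<subseteq> V - {r}" using link_props(7)[OF u] .
  have QX: "\<And>l. l \<in> X \<Longrightarrow> Q l \<subseteq> V - {r}" using link_props(7) F_link X by blast
  have "(\<Union>l\<in>X. Pl E l) = (\<Union>l\<in>X. pe E r ` Q l)" using PX by (intro SUP_cong) simp_all
  then have "(\<Union>l\<in>X. Pl E l) = pe E r ` \<Union>(Q ` X)" by (simp add: image_UN)
  then have "covers E X (Pl E u) \<longleftrightarrow> pe E r ` Q u \<subseteq> pe E r ` \<Union>(Q ` X)"
    unfolding covers_def PU by simp
  also have "\<dots> \<longleftrightarrow> Q u \<subseteq> \<Union>(Q ` X)"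
  proof
    assume h: "pe E r ` Q u \<subseteq> pe E r ` \<Union>(Q ` X)"
    show "Q u \<subseteq> \<Union>(Q ` X)"
    proof
      fix w assume w: "w \<in> Q u"
      then obtain w' where w': "w' \<in> \<Union>(Q ` X)" "pe E r w = pe E r w'" using h by blast
      have "w \<in> V - {r}" "w' \<in> V - {r}" using w w' QU QX by auto
      then have "w = w'" using pe_inj w' by (auto dest: inj_onD)
      then show "w \<in> \<Union>(Q ` X)" using w' by simp
    qed
  next
    assume "Q u \<subseteq> \<Union>(Q ` X)"
    then show "pe E r ` Q u \<subseteq> pe E r ` \<Union>(Q ` X)" by (rule image_mono)
  qed
  finally show ?thesis .
qed

lemma Fs_cov: assumes u: "u \<in> U" shows "Q u \<subseteq> \<Union>(Q ` Fs u)"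
proof -
  have "covers E (Fs u) (Pl E u)" using Fsel_u[OF u] by blast
  then show ?thesis using covers_iff[OF conjunct1[OF U_link[OF u]] Fs_F[OF u]] by simp
qed

lemma Fs_min: "u \<in> U \<Longrightarrow> X \<subset> Fs u \<Longrightarrow> \<not> Q u \<subseteq> \<Union>(Q ` X)"
proof -
  assume u: "u \<in> U" and X: "X \<subset> Fs u"
  have "\<not> covers E X (Pl E u)" using Fsel_u[OF u] X by blast
  moreover have "X \<subseteq> F" using X Fs_F[OF u] by blast
  ultimately show ?thesis using covers_iff[OF conjunct1[OF U_link[OF u]]] by simp
qed

lemma Xc_ne: assumes u: "u \<in> U" and l: "l \<in> Fs u" shows "Xc u l \<noteq> {}"
proof
  assume e: "Xc u l = {}"
  have "Q u \<subseteq> \<Union>(Q ` (Fs u - {l}))" using e unfolding Exc_def by blast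
  moreover have "Fs u - {l} \<subset> Fs u" using l by blast
  ultimately show False using Fs_min u by blast
qed

lemma Xc_Qu: "w \<in> Xc u l \<Longrightarrow> w \<in> Q u" unfolding Exc_def by blast

lemma Xc_Ql: assumes u: "u \<in> U" and w: "w \<in> Xc u l" shows "w \<in> Q l"
proof -
  obtain l' where "l' \<in> Fs u" "w \<in> Q l'" using Fs_cov[OF u] Xc_Qu[OF w] by blast
  then show ?thesis using w unfolding Exc_def by (cases "l' = l") auto
qed

lemma Xc_other: "w \<in> Xc u l \<Longrightarrow> l' \<in> Fs u \<Longrightarrow> l' \<noteq> l \<Longrightarrow> w \<notin> Q l'"
  unfolding Exc_def by blast

lemma disjQ: assumes "u \<in> U" "u' \<in> U" "u \<noteq> u'" shows "Q u \<inter> Q u' = {}"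
proof -
  have "Pl E u \<inter> Pl E u' = {}" using disj assms by blast
  moreover have "Pl E u = pe E r ` Q u" "Pl E u' = pe E r ` Q u'"
    using link_props(6) conjunct1[OF U_link] assms by blast+
  ultimately show ?thesis by blast
qed

lemma Qu_char: assumes u: "u \<in> U"
  shows "w \<in> Q u \<longleftrightarrow> anc (tu u) w \<and> w \<noteq> tu u \<and> anc w (bu u)"
proof -
  have "Q u = {w. anc (tu u) w \<and> w \<noteq> tu u \<and> anc w (bu u)}"
    using uplink_props(7) U_link[OF u] by blast
  then show ?thesis by simp
qed

lemma bu_V: "u \<in> U \<Longrightarrow> bu u \<in> V" using uplink_props(5) U_link by blast
lemma tu_V: "u \<in> U \<Longrightarrow> tu u \<in> V" using uplink_props(4) U_link by blast

lemma Pul_eq: assumes u: "u \<in> U" shows "Pul E Fs u l = pe E r ` Xc u l"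
proof -
  have PU: "Pl E u = pe E r ` Q u" using link_props(6) U_link[OF u] by blast
  have PX: "\<And>l. l \<in> Fs u \<Longrightarrow> Pl E l = pe E r ` Q l" using link_props(6) F_link Fs_F[OF u] by blast
  have QU: "Q u \<subseteq> V - {r}" using link_props(7) U_link[OF u] by blast
  have QX: "\<And>l. l \<in> Fs u \<Longrightarrow> Q l \<subseteq> V - {r}" using link_props(7) F_link Fs_F[OF u] by blast
  have "(\<Union>l'\<in>Fs u - {l}. Pl E l') = (\<Union>l'\<in>Fs u - {l}. pe E r ` Q l')" using PX by (intro SUP_cong) simp_all
  then have U1: "(\<Union>l'\<in>Fs u - {l}. Pl E l') = pe E r ` \<Union>(Q ` (Fs u - {l}))" by (simp add: image_UN)
  have "Q u \<union> \<Union>(Q ` (Fs u - {l})) \<subseteq> V - {r}" using QU QX by blast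
  then have inj: "inj_on (pe E r) (Q u \<union> \<Union>(Q ` (Fs u - {l})))" using pe_inj inj_on_subset by blast
  have "Pul E Fs u l = pe E r ` Q u - pe E r ` \<Union>(Q ` (Fs u - {l}))"
    unfolding Pul_def PU U1 ..
  also have "\<dots> = pe E r ` (Q u - \<Union>(Q ` (Fs u - {l})))"
    using inj_on_image_set_diff[OF inj, of "Q u" "\<Union>(Q ` (Fs u - {l}))"] by blast
  finally show ?thesis unfolding Exc_def .
qed

lemma prec_iff: assumes u: "u \<in> U"
  shows "prec_u E r Fs u l1 l2 \<longleftrightarrow> (\<forall>v\<in>Xc u l1. \<forall>w\<in>Xc u l2. dep v < dep w)"
proof -
  define t where "t = tu u"
  define b where "b = bu u"
  have tb: "anc t b" "t \<noteq> b" "t \<in> V" "b \<in> V" using uplink_props U_link[OF u] by (auto simp: t_def b_def)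
  have tp: "tpath E t b = drop (dep t) (P b)" using uplink_props(8) U_link[OF u] by (simp add: t_def b_def)
  define es where "es = edges_of (tpath E t b)"
  have les: "length es = dep b - dep t" using tp len_P[OF tb(4)] by (simp add: es_def)
  have dtb: "dep t \<le> dep b" using anc_dep_le tb by blast
  have esi: "\<And>i. i < length es \<Longrightarrow> es ! i = pe E r (P b ! Suc (dep t + i))"
    using nth_edges_drop[OF tb(4)] les tp dtb unfolding es_def by simp
  have Exs: "\<And>l. Xc u l \<subseteq> V - {r}" using Xc_Qu link_props(7) U_link[OF u] by blast
  have nV: "\<And>i. i < length es \<Longrightarrow> P b ! Suc (dep t + i) \<in> V - {r} \<and> dep (P b ! Suc (dep t + i)) = Suc (dep t + i)"
  proof -
    fix i assume i: "i < length es"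
    have le: "Suc (dep t + i) \<le> dep b" using i les by simp
    have "P b ! Suc (dep t + i) \<noteq> r" using nth_anc[OF tb(4) le] dep_r by auto
    then show "P b ! Suc (dep t + i) \<in> V - {r} \<and> dep (P b ! Suc (dep t + i)) = Suc (dep t + i)"
      using nth_anc[OF tb(4) le] by auto
  qed
  have mem: "\<And>i l. i < length es \<Longrightarrow> es ! i \<in> Pul E Fs u l \<longleftrightarrow> P b ! Suc (dep t + i) \<in> Xc u l"
  proof -
    fix i l assume i: "i < length es"
    have "es ! i \<in> pe E r ` Xc u l \<longleftrightarrow> P b ! Suc (dep t + i) \<in> Xc u l"
      using esi[OF i] inj_on_image_mem_iff[OF pe_inj conjunct1[OF nV[OF i]] Exs] by simp
    then show "es ! i \<in> Pul E Fs u l \<longleftrightarrow> P b ! Suc (dep t + i) \<in> Xc u l" using Pul_eq[OF u] by simp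
  qed
  have idx: "\<And>v l. v \<in> Xc u l \<Longrightarrow> \<exists>i < length es. v = P b ! Suc (dep t + i) \<and> dep v = Suc (dep t + i)"
  proof -
    fix v l assume v: "v \<in> Xc u l"
    have q: "anc t v" "v \<noteq> t" "anc v b" using Qu_char[OF u] Xc_Qu[OF v] by (auto simp: t_def b_def)
    have vV: "v \<in> V" using anc_V tb q by blast
    have "dep t < dep v" using anc_less[OF vV q(1)] q(2) by simp
    moreover have "dep v \<le> dep b" using anc_dep_le tb q by blast
    moreover have "P b ! dep v = v" using anc_char tb q by blast
    ultimately show "\<exists>i < length es. v = P b ! Suc (dep t + i) \<and> dep v = Suc (dep t + i)"
      using les by (intro exI[of _ "dep v - Suc (dep t)"]) auto
  qed
  have "prec_u E r Fs u l1 l2 \<longleftrightarrow> (\<forall>i j. i < length es \<and> j < length es \<and> es ! i \<in> Pul E Fs u l1 \<and> es ! j \<in> Pul E Fs u l2 \<longrightarrow> i < j)"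
    unfolding prec_u_def Let_def es_def t_def b_def ..
  also have "\<dots> \<longleftrightarrow> (\<forall>v\<in>Xc u l1. \<forall>w\<in>Xc u l2. dep v < dep w)"
  proof
    assume h: "\<forall>i j. i < length es \<and> j < length es \<and> es ! i \<in> Pul E Fs u l1 \<and> es ! j \<in> Pul E Fs u l2 \<longrightarrow> i < j"
    show "\<forall>v\<in>Xc u l1. \<forall>w\<in>Xc u l2. dep v < dep w"
    proof (intro ballI)
      fix v w assume v: "v \<in> Xc u l1" and w: "w \<in> Xc u l2"
      obtain i where i: "i < length es" "v = P b ! Suc (dep t + i)" "dep v = Suc (dep t + i)" using idx[OF v] by blast
      obtain j where j: "j < length es" "w = P b ! Suc (dep t + j)" "dep w = Suc (dep t + j)" using idx[OF w] by blast
      have "es ! i \<in> Pul E Fs u l1" using mem[OF i(1)] i v by simp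
      moreover have "es ! j \<in> Pul E Fs u l2" using mem[OF j(1)] j w by simp
      ultimately have "i < j" using h i j by blast
      then show "dep v < dep w" using i j by simp
    qed
  next
    assume h: "\<forall>v\<in>Xc u l1. \<forall>w\<in>Xc u l2. dep v < dep w"
    show "\<forall>i j. i < length es \<and> j < length es \<and> es ! i \<in> Pul E Fs u l1 \<and> es ! j \<in> Pul E Fs u l2 \<longrightarrow> i < j"
    proof (intro allI impI)
      fix i j assume ij: "i < length es \<and> j < length es \<and> es ! i \<in> Pul E Fs u l1 \<and> es ! j \<in> Pul E Fs u l2"
      then have "P b ! Suc (dep t + i) \<in> Xc u l1" "P b ! Suc (dep t + j) \<in> Xc u l2" using mem by auto
      then have "dep (P b ! Suc (dep t + i)) < dep (P b ! Suc (dep t + j))" using h by blast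
      then show "i < j" using nV ij by simp
    qed
  qed
  finally show ?thesis .
qed

end


context prob begin

lemma Q_props: "l \<in> F \<Longrightarrow> w \<in> Q l \<Longrightarrow> anc (ap l) w \<and> w \<noteq> ap l \<and> w \<in> Vl E l \<and> w \<in> V"
  using link_props(5,7) F_link by blast

lemma Vl_props: "l \<in> F \<Longrightarrow> x \<in> Vl E l \<Longrightarrow> anc (ap l) x \<and> x \<in> V"
  using link_props(3) F_link by blast

lemma ap_V: "l \<in> F \<Longrightarrow> ap l \<in> V"
  using link_props(1) F_link by blast

lemma K1: "l \<in> F \<Longrightarrow> x \<in> Vl E l \<Longrightarrow> anc (ap l) w \<Longrightarrow> w \<noteq> ap l \<Longrightarrow> anc w x \<Longrightarrow> w \<in> Q l"
  using link_props(4) F_link by blast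

lemma between: assumes l: "l \<in> F" and p: "p \<in> Q l" and q: "q \<in> Vl E l" and pw: "anc p w" and wq: "anc w q"
  shows "w \<in> Q l"
proof -
  have pp: "anc (ap l) p" "p \<noteq> ap l" "p \<in> V" using Q_props[OF l p] by auto
  have qV: "q \<in> V" using Vl_props[OF l q] by blast
  have wV: "w \<in> V" using anc_V[OF qV wq] .
  have aw: "anc (ap l) w" using anc_trans[OF wV pp(1) pw] .
  have "w \<noteq> ap l"
  proof
    assume "w = ap l"
    then have "anc p (ap l)" using pw by simp
    then show False using anc_antisym[OF pp(3) pp(1)] pp(2) by blast
  qed
  then show ?thesis using K1[OF l q aw _ wq] by blast
qed

lemma dep_lt_anc: assumes v: "v \<in> V" "anc a v" "anc b v" "dep a < dep b" shows "anc a b \<and> a \<noteq> b"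
  using anc_chain[OF v(1,2,3)] v(4) by auto

lemma comp_neq: assumes v: "v \<in> V" "anc a v" "anc b v" "a \<noteq> b"
  shows "dep a < dep b \<or> dep b < dep a"
  using anc_dep_eq[OF v(1,2,3)] v(4) by (cases "dep a = dep b") auto

lemma Xc_anc: "u \<in> U \<Longrightarrow> w \<in> Xc u l \<Longrightarrow> anc w (bu u) \<and> anc (tu u) w \<and> w \<noteq> tu u"
  using Qu_char Xc_Qu by blast

lemma Fs_link: "u \<in> U \<Longrightarrow> l \<in> Fs u \<Longrightarrow> l \<in> F" using Fs_F by blast

lemma no_interleave: assumes u: "u \<in> U" and l1: "l1 \<in> Fs u" and l2: "l2 \<in> Fs u" and ne: "l1 \<noteq> l2"
  and p: "p \<in> Xc u l1" "p' \<in> Xc u l1" and q: "q \<in> Xc u l2" "q' \<in> Xc u l2"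
  and pq: "dep p < dep q" and qp: "dep q' < dep p'"
  shows False
proof -
  define b where "b = bu u"
  have bV: "b \<in> V" using bu_V[OF u] by (simp add: b_def)
  have ab: "anc p b" "anc p' b" "anc q b" "anc q' b" using Xc_anc[OF u] p q by (auto simp: b_def)
  have F1: "l1 \<in> F" and F2: "l2 \<in> F" using Fs_link u l1 l2 by auto
  have pQ: "p \<in> Q l1" "p' \<in> Q l1" using Xc_Ql[OF u] p by auto
  have qQ: "q \<in> Q l2" "q' \<in> Q l2" using Xc_Ql[OF u] q by auto
  have qn: "q \<notin> Q l1" "q' \<notin> Q l1" using Xc_other q l1 ne by blast+
  have pn: "p \<notin> Q l2" "p' \<notin> Q l2" using Xc_other p l2 ne by blast+
  have pq1: "anc p q" using dep_lt_anc[OF bV ab(1) ab(3) pq] by blast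
  show False
  proof (cases "dep q < dep p'")
    case True
    have "anc q p'" using dep_lt_anc[OF bV ab(3) ab(2) True] by blast
    then have "q \<in> Q l1" using between[OF F1 pQ(1) _ pq1] Q_props[OF F1 pQ(2)] by blast
    then show False using qn by blast
  next
    case False
    have "p' \<noteq> q" using pn qQ by blast
    then have "dep p' < dep q" using False comp_neq[OF bV ab(2) ab(3)] by auto
    then have "anc p' q" using dep_lt_anc[OF bV ab(2) ab(3)] by blast
    moreover have "anc q' p'" using dep_lt_anc[OF bV ab(4) ab(2) qp] by blast
    ultimately have "p' \<in> Q l2" using between[OF F2 qQ(2)] Q_props[OF F2 qQ(1)] by blast
    then show False using pn by blast
  qed
qed

lemma prec_total: assumes u: "u \<in> U" and l1: "l1 \<in> Fs u" and l2: "l2 \<in> Fs u" and ne: "l1 \<noteq> l2"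
  shows "prec_u E r Fs u l1 l2 \<or> prec_u E r Fs u l2 l1"
proof -
  obtain p0 where p0: "p0 \<in> Xc u l1" using Xc_ne[OF u l1] by blast
  obtain q0 where q0: "q0 \<in> Xc u l2" using Xc_ne[OF u l2] by blast
  have bV: "bu u \<in> V" using bu_V[OF u] .
  have key: "\<And>la lb pa qb. la \<in> Fs u \<Longrightarrow> lb \<in> Fs u \<Longrightarrow> la \<noteq> lb \<Longrightarrow> pa \<in> Xc u la \<Longrightarrow> qb \<in> Xc u lb \<Longrightarrow> dep pa < dep qb \<Longrightarrow> prec_u E r Fs u la lb"
  proof -
    fix la lb pa qb assume la: "la \<in> Fs u" and lb: "lb \<in> Fs u" and nab: "la \<noteq> lb"
      and pa: "pa \<in> Xc u la" and qb: "qb \<in> Xc u lb" and lt: "dep pa < dep qb"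
    show "prec_u E r Fs u la lb" unfolding prec_iff[OF u]
    proof (intro ballI)
      fix v w assume v: "v \<in> Xc u la" and w: "w \<in> Xc u lb"
      have "v \<noteq> w" using Xc_other[OF v lb] Xc_Ql[OF u w] nab by blast
      then have "dep v < dep w \<or> dep w < dep v" using comp_neq[OF bV] Xc_anc[OF u] v w by blast
      then show "dep v < dep w" using no_interleave[OF u la lb nab pa v qb w lt] by blast
    qed
  qed
  have "p0 \<noteq> q0" using Xc_other[OF p0 l2] Xc_Ql[OF u q0] ne by blast
  then have "dep p0 < dep q0 \<or> dep q0 < dep p0" using comp_neq[OF bV] Xc_anc[OF u] p0 q0 by blast
  then show ?thesis using key[OF l1 l2 ne p0 q0] key[OF l2 l1 _ q0 p0] ne by auto
qed

lemma prec_irrefl: "u \<in> U \<Longrightarrow> l \<in> Fs u \<Longrightarrow> \<not> prec_u E r Fs u l l"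
  using Xc_ne prec_iff by fastforce

lemma prec_trans: assumes u: "u \<in> U" and l2: "l2 \<in> Fs u"
  and a: "prec_u E r Fs u l1 l2" and b: "prec_u E r Fs u l2 l3"
  shows "prec_u E r Fs u l1 l3"
proof -
  obtain m where m: "m \<in> Xc u l2" using Xc_ne[OF u l2] by blast
  show ?thesis using a b m unfolding prec_iff[OF u] by (meson less_trans)
qed

lemma prec_asym: assumes u: "u \<in> U" and l1: "l1 \<in> Fs u" and l2: "l2 \<in> Fs u"
  and a: "prec_u E r Fs u l1 l2" and b: "prec_u E r Fs u l2 l1" shows False
  using prec_trans[OF u l2 a b] prec_irrefl[OF u l1] by blast

lemma Au_iff: "(l1,l2) \<in> Au E r Fs u \<longleftrightarrow> l1 \<in> Fs u \<and> l2 \<in> Fs u \<and> l1 \<noteq> l2 \<and> prec_u E r Fs u l1 l2 \<and>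
      \<not>(\<exists>l3\<in>Fs u. l3 \<noteq> l1 \<and> l3 \<noteq> l2 \<and> prec_u E r Fs u l1 l3 \<and> prec_u E r Fs u l3 l2)"
  unfolding Au_def by simp

lemma succ_unique: assumes u: "u \<in> U" and a1: "(n,l1) \<in> Au E r Fs u" and a2: "(n,l2) \<in> Au E r Fs u"
  shows "l1 = l2"
proof (rule ccontr)
  assume ne: "l1 \<noteq> l2"
  have h1: "n \<in> Fs u" "l1 \<in> Fs u" "n \<noteq> l1" "prec_u E r Fs u n l1"
    and c1: "\<not>(\<exists>l3\<in>Fs u. l3 \<noteq> n \<and> l3 \<noteq> l1 \<and> prec_u E r Fs u n l3 \<and> prec_u E r Fs u l3 l1)"
    using a1 unfolding Au_iff by blast+
  have h2: "l2 \<in> Fs u" "n \<noteq> l2" "prec_u E r Fs u n l2"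
    and c2: "\<not>(\<exists>l3\<in>Fs u. l3 \<noteq> n \<and> l3 \<noteq> l2 \<and> prec_u E r Fs u n l3 \<and> prec_u E r Fs u l3 l2)"
    using a2 unfolding Au_iff by blast+
  from prec_total[OF u h1(2) h2(1) ne] show False
    using c1 c2 h1 h2 ne by blast
qed

lemma pred_unique: assumes u: "u \<in> U" and a1: "(n1,l) \<in> Au E r Fs u" and a2: "(n2,l) \<in> Au E r Fs u"
  shows "n1 = n2"
proof (rule ccontr)
  assume ne: "n1 \<noteq> n2"
  have h1: "n1 \<in> Fs u" "l \<in> Fs u" "n1 \<noteq> l" "prec_u E r Fs u n1 l"
    and c1: "\<not>(\<exists>l3\<in>Fs u. l3 \<noteq> n1 \<and> l3 \<noteq> l \<and> prec_u E r Fs u n1 l3 \<and> prec_u E r Fs u l3 l)"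
    using a1 unfolding Au_iff by blast+
  have h2: "n2 \<in> Fs u" "n2 \<noteq> l" "prec_u E r Fs u n2 l"
    and c2: "\<not>(\<exists>l3\<in>Fs u. l3 \<noteq> n2 \<and> l3 \<noteq> l \<and> prec_u E r Fs u n2 l3 \<and> prec_u E r Fs u l3 l)"
    using a2 unfolding Au_iff by blast+
  from prec_total[OF u h1(1) h2(1) ne] show False
    using c1 c2 h1 h2 ne by blast
qed

lemma AF1: assumes u: "u \<in> U" and a: "(n,l) \<in> Au E r Fs u"
  shows "ap l \<in> Q u"
proof -
  have h: "n \<in> Fs u" "l \<in> Fs u" "n \<noteq> l" "prec_u E r Fs u n l" using a unfolding Au_iff by blast+
  have lF: "l \<in> F" using Fs_link u h by blast
  obtain w where w: "w \<in> Xc u l" using Xc_ne[OF u h(2)] by blast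
  obtain v where v: "v \<in> Xc u n" using Xc_ne[OF u h(1)] by blast
  have vw: "dep v < dep w" using h(4) v w unfolding prec_iff[OF u] by blast
  define t where "t = tu u"
  define b where "b = bu u"
  have bV: "b \<in> V" using bu_V[OF u] by (simp add: b_def)
  have va: "anc v b" "anc t v" "v \<noteq> t" using Xc_anc[OF u v] by (auto simp: t_def b_def)
  have wa: "anc w b" "anc t w" "w \<noteq> t" using Xc_anc[OF u w] by (auto simp: t_def b_def)
  have vw2: "anc v w" using dep_lt_anc[OF bV va(1) wa(1) vw] by blast
  have wQ: "w \<in> Q l" using Xc_Ql[OF u w] .
  have wp: "anc (ap l) w" "w \<noteq> ap l" "w \<in> Vl E l" "w \<in> V" using Q_props[OF lF wQ] by auto
  have vnot: "v \<notin> Q l" using Xc_other[OF v h(2)] h(3) by blast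
  have "anc (ap l) t \<or> anc t (ap l)" using anc_comp[OF wp(4) wp(1) wa(2)] .
  moreover have "\<not> anc (ap l) t"
  proof
    assume at: "anc (ap l) t"
    have vV: "v \<in> V" using anc_V[OF bV va(1)] .
    have av: "anc (ap l) v" using anc_trans[OF vV at va(2)] .
    have "v \<noteq> ap l"
    proof
      assume "v = ap l"
      then have "anc v t" using at by simp
      then show False using anc_antisym[OF vV va(2)] va(3) by blast
    qed
    then have "v \<in> Q l" using K1[OF lF wp(3) av _ vw2] by blast
    then show False using vnot by blast
  qed
  ultimately have ta: "anc t (ap l)" by blast
  have "t \<noteq> ap l" using ta \<open>\<not> anc (ap l) t\<close> by blast
  moreover have "anc (ap l) b" using anc_trans[OF bV wp(1) wa(1)] .
  ultimately show ?thesis using Qu_char[OF u] ta by (simp add: t_def b_def)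
qed

lemma AF3: assumes u: "u \<in> U" and a: "(n,l) \<in> Au E r Fs u" and v: "v \<in> Xc u n"
  shows "anc v (ap l)"
proof (rule ccontr)
  assume nv: "\<not> anc v (ap l)"
  have h: "n \<in> Fs u" "l \<in> Fs u" "n \<noteq> l" "prec_u E r Fs u n l" using a unfolding Au_iff by blast+
  have lF: "l \<in> F" using Fs_link u h by blast
  define b where "b = bu u"
  have bV: "b \<in> V" using bu_V[OF u] by (simp add: b_def)
  have alQ: "ap l \<in> Q u" using AF1[OF u a] .
  have ab: "anc (ap l) b" using Qu_char[OF u] alQ by (simp add: b_def)
  have vb: "anc v b" using Xc_anc[OF u v] by (simp add: b_def)
  have av: "anc (ap l) v" using anc_comp[OF bV ab vb] nv by blast
  have avn: "v \<noteq> ap l" using nv anc_refl ap_V[OF lF] by blast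
  obtain w where w: "w \<in> Xc u l" using Xc_ne[OF u h(2)] by blast
  have vw: "dep v < dep w" using h(4) v w unfolding prec_iff[OF u] by blast
  have wb: "anc w b" using Xc_anc[OF u w] by (simp add: b_def)
  have vw2: "anc v w" using dep_lt_anc[OF bV vb wb vw] by blast
  have wV: "w \<in> Vl E l" using Q_props[OF lF Xc_Ql[OF u w]] by blast
  have "v \<in> Q l" using K1[OF lF wV av avn vw2] .
  then show False using Xc_other[OF v h(2)] h(3) by blast
qed

lemma AF2: assumes u: "u \<in> U" and a: "(n,l) \<in> Au E r Fs u"
  shows "ap l \<in> Q n"
proof (rule ccontr)
  assume naQ: "ap l \<notin> Q n"
  have h: "n \<in> Fs u" "l \<in> Fs u" "n \<noteq> l" "prec_u E r Fs u n l"
    and cons: "\<not>(\<exists>l3\<in>Fs u. l3 \<noteq> n \<and> l3 \<noteq> l \<and> prec_u E r Fs u n l3 \<and> prec_u E r Fs u l3 l)"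
    using a unfolding Au_iff by blast+
  have lF: "l \<in> F" and nF: "n \<in> F" using Fs_link u h by auto
  define b where "b = bu u"
  have bV: "b \<in> V" using bu_V[OF u] by (simp add: b_def)
  have alQ: "ap l \<in> Q u" using AF1[OF u a] .
  have ab: "anc (ap l) b" using Qu_char[OF u] alQ by (simp add: b_def)
  obtain m where m: "m \<in> Fs u" "ap l \<in> Q m" using Fs_cov[OF u] alQ by blast
  have mF: "m \<in> F" using Fs_link u m by blast
  have ml: "m \<noteq> l" using m(2) Q_props[OF lF] by blast
  have mn: "m \<noteq> n" using m(2) naQ by blast
  obtain v where v: "v \<in> Xc u n" using Xc_ne[OF u h(1)] by blast
  have va: "anc v (ap l)" using AF3[OF u a v] .
  have vQn: "v \<in> Q n" using Xc_Ql[OF u v] .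
  have vna: "v \<noteq> ap l" using vQn naQ by blast
  have vb: "anc v b" using Xc_anc[OF u v] by (simp add: b_def)
  have vnm: "v \<notin> Q m" using Xc_other[OF v m(1) mn] .
  have amV: "ap l \<in> Vl E m" using Q_props[OF mF m(2)] by blast
  have c1: "\<not> prec_u E r Fs u m n"
  proof
    assume p: "prec_u E r Fs u m n"
    obtain z where z: "z \<in> Xc u m" using Xc_ne[OF u m(1)] by blast
    have zv: "dep z < dep v" using p z v unfolding prec_iff[OF u] by blast
    have zb: "anc z b" using Xc_anc[OF u z] by (simp add: b_def)
    have zv2: "anc z v" using dep_lt_anc[OF bV zb vb zv] by blast
    have "v \<in> Q m" using between[OF mF Xc_Ql[OF u z] amV zv2 va] .
    then show False using vnm by blast
  qed
  have c2: "\<not> prec_u E r Fs u l m"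
  proof
    assume p: "prec_u E r Fs u l m"
    obtain z where z: "z \<in> Xc u m" using Xc_ne[OF u m(1)] by blast
    obtain w where w: "w \<in> Xc u l" using Xc_ne[OF u h(2)] by blast
    have wz: "dep w < dep z" using p z w unfolding prec_iff[OF u] by blast
    have zb: "anc z b" using Xc_anc[OF u z] by (simp add: b_def)
    have wb: "anc w b" using Xc_anc[OF u w] by (simp add: b_def)
    have wz2: "anc w z" using dep_lt_anc[OF bV wb zb wz] by blast
    have aw: "anc (ap l) w" using Q_props[OF lF Xc_Ql[OF u w]] by blast
    have zV: "z \<in> Vl E m" using Q_props[OF mF Xc_Ql[OF u z]] by blast
    have "w \<in> Q m" using between[OF mF m(2) zV aw wz2] .
    then show False using Xc_other[OF w m(1) ml] by blast
  qed
  have "prec_u E r Fs u n m" using prec_total[OF u h(1) m(1)] mn c1 by blast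
  moreover have "prec_u E r Fs u m l" using prec_total[OF u m(1) h(2) ml] c2 by blast
  ultimately show False using cons m(1) mn ml by blast
qed

lemma arc_ap: assumes u: "u \<in> U" and a: "(n,l) \<in> Au E r Fs u"
  shows "anc (ap n) (ap l) \<and> ap n \<noteq> ap l \<and> dep (ap n) < dep (ap l)"
proof -
  have nF: "n \<in> F" and lF: "l \<in> F" using a Fs_link u unfolding Au_iff by blast+
  have "anc (ap n) (ap l) \<and> ap n \<noteq> ap l" using Q_props[OF nF AF2[OF u a]] by auto
  moreover then have "dep (ap n) < dep (ap l)" using anc_less[OF ap_V[OF lF]] by blast
  ultimately show ?thesis by blast
qed

end


fun walk :: "'c \<Rightarrow> ('b \<times> 'c \<times> 'c) list \<Rightarrow> 'c \<Rightarrow> bool" where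
  "walk y [] z = (y = z)"
| "walk y (a # as) z = (fst (snd a) = y \<and> walk (snd (snd a)) as z)"

definition nodes :: "'c \<Rightarrow> ('b \<times> 'c \<times> 'c) list \<Rightarrow> 'c list" where
  "nodes y as = y # map (\<lambda>a. snd (snd a)) as"

lemma walk_snoc: "walk y (bs @ [a]) z \<longleftrightarrow> walk y bs (fst (snd a)) \<and> snd (snd a) = z"
  by (induction bs arbitrary: y) auto

lemma nodes_snoc: "set (nodes y (bs @ [a])) = insert (snd (snd a)) (set (nodes y bs))"
  by (auto simp: nodes_def)

lemma walk_src: "walk y as z \<Longrightarrow> w \<in> set (nodes y as) \<Longrightarrow> w \<noteq> z \<Longrightarrow> \<exists>a\<in>set as. fst (snd a) = w"
proof (induction as arbitrary: y)
  case Nil then show ?case by (simp add: nodes_def)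
next
  case (Cons a as)
  show ?case
  proof (cases "w = y")
    case True then show ?thesis using Cons.prems by auto
  next
    case False
    then have "w \<in> set (nodes (snd (snd a)) as)" using Cons.prems by (auto simp: nodes_def)
    then show ?thesis using Cons.IH[of "snd (snd a)"] Cons.prems by auto
  qed
qed

lemma walk_arc_nodes: "walk y as z \<Longrightarrow> a \<in> set as \<Longrightarrow> fst (snd a) \<in> set (nodes y as) \<and> snd (snd a) \<in> set (nodes y as)"
proof (induction as arbitrary: y)
  case Nil then show ?case by simp
next
  case (Cons b as)
  show ?case
  proof (cases "a = b")
    case True then show ?thesis using Cons.prems by (auto simp: nodes_def)
  next
    case False
    then have "a \<in> set as" using Cons.prems by simp
    then have "fst (snd a) \<in> set (nodes (snd (snd b)) as) \<and> snd (snd a) \<in> set (nodes (snd (snd b)) as)"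
      using Cons.IH Cons.prems by auto
    then show ?thesis by (auto simp: nodes_def)
  qed
qed

lemma walk_consec: "walk y as z \<Longrightarrow> Suc i < length as \<Longrightarrow> snd (snd (as ! i)) = fst (snd (as ! Suc i))"
proof (induction as arbitrary: y i)
  case Nil then show ?case by simp
next
  case (Cons a as)
  show ?case
  proof (cases i)
    case 0
    then obtain a' as' where "as = a' # as'" using Cons.prems by (cases as) auto
    then show ?thesis using Cons.prems 0 by simp
  next
    case (Suc j)
    then show ?thesis using Cons.IH[of "snd (snd a)" j] Cons.prems by simp
  qed
qed

lemma walk_ex: assumes "(y,z) \<in> (arc_rel D)\<^sup>*" shows "\<exists>as. walk y as z \<and> set as \<subseteq> D"
  using assms
proof (induction rule: converse_rtrancl_induct)
  case base
  show ?case by (rule exI[of _ "[]"]) simp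
next
  case (step y y')
  then obtain u where "(u,y,y') \<in> D" by (auto simp: arc_rel_def)
  moreover obtain as where "walk y' as z" "set as \<subseteq> D" using step by blast
  ultimately show ?case by (intro exI[of _ "(u,y,y') # as"]) simp
qed

lemma rt_last: "(a,b) \<in> r\<^sup>* \<Longrightarrow> a \<noteq> b \<Longrightarrow> \<exists>p. (a,p) \<in> r\<^sup>* \<and> (p,b) \<in> r"
  by (erule rtranclE) auto

lemma rt_first: "(a,b) \<in> r\<^sup>* \<Longrightarrow> a \<noteq> b \<Longrightarrow> \<exists>p. (a,p) \<in> r \<and> (p,b) \<in> r\<^sup>*"
  by (erule converse_rtranclE) auto

context prob begin

abbreviation D where "D \<equiv> dep_arcs E r Fs U"
abbreviation R where "R \<equiv> arc_rel D"

lemma R_iff: "(x,y) \<in> R \<longleftrightarrow> (\<exists>u\<in>U. (x,y) \<in> Au E r Fs u)"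
  unfolding arc_rel_def dep_arcs_def by blast

lemma D_R: "(u,x,y) \<in> D \<Longrightarrow> u \<in> U \<and> (x,y) \<in> Au E r Fs u \<and> (x,y) \<in> R"
  unfolding arc_rel_def dep_arcs_def by blast

lemma R_F: assumes "(x,y) \<in> R" shows "x \<in> F \<and> y \<in> F"
proof -
  obtain u where u: "u \<in> U" "(x,y) \<in> Au E r Fs u" using R_iff assms by blast
  then have "x \<in> Fs u" "y \<in> Fs u" unfolding Au_def by auto
  then show ?thesis using Fs_link u(1) by blast
qed

lemma R_ap: assumes "(x,y) \<in> R" shows "anc (ap x) (ap y) \<and> dep (ap x) < dep (ap y)"
proof -
  obtain u where u: "u \<in> U" "(x,y) \<in> Au E r Fs u" using R_iff assms by blast
  then show ?thesis using arc_ap by blast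
qed

lemma Rs_F: "(x,y) \<in> R\<^sup>* \<Longrightarrow> x \<in> F \<Longrightarrow> y \<in> F"
  by (induction rule: rtrancl_induct) (auto dest: R_F)

lemma Rs_F2: "(x,y) \<in> R\<^sup>* \<Longrightarrow> y \<in> F \<Longrightarrow> x \<in> F"
  by (induction rule: converse_rtrancl_induct) (auto dest: R_F)

lemma Rs_ap: assumes "(x,y) \<in> R\<^sup>*" "y \<in> F" shows "anc (ap x) (ap y)"
  using assms
proof (induction rule: converse_rtrancl_induct)
  case base then show ?case using anc_refl ap_V by blast
next
  case (step x x')
  have "anc (ap x) (ap x')" using R_ap step by blast
  moreover have "anc (ap x') (ap y)" using step by blast
  ultimately show ?case using anc_trans ap_V step by blast
qed

lemma Rp_dep: assumes "(x,y) \<in> R\<^sup>+" shows "dep (ap x) < dep (ap y)"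
  using assms by (induction rule: trancl_induct) (auto dest: R_ap)

lemma Rs_dep: assumes "(x,y) \<in> R\<^sup>*" shows "dep (ap x) \<le> dep (ap y)"
proof (cases "x = y")
  case False
  then have "(x,y) \<in> R\<^sup>+" using rtranclD[OF assms] by blast
  then show ?thesis using Rp_dep by fastforce
qed simp

lemma Rs_antisym: "(x,y) \<in> R\<^sup>* \<Longrightarrow> (y,x) \<in> R\<^sup>* \<Longrightarrow> x = y"
proof (rule ccontr)
  assume a: "(x,y) \<in> R\<^sup>*" "(y,x) \<in> R\<^sup>*" "x \<noteq> y"
  then have "(x,y) \<in> R\<^sup>+" using rtranclD[OF a(1)] by blast
  then have "dep (ap x) < dep (ap y)" by (rule Rp_dep)
  moreover have "dep (ap y) \<le> dep (ap x)" using Rs_dep a by blast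
  ultimately show False by simp
qed

lemma in_deg: assumes "(x,y) \<in> R" "(x',y) \<in> R" shows "x = x'"
proof -
  obtain u where u: "u \<in> U" "(x,y) \<in> Au E r Fs u" using R_iff assms by blast
  obtain u' where u': "u' \<in> U" "(x',y) \<in> Au E r Fs u'" using R_iff assms by blast
  show ?thesis
  proof (cases "u = u'")
    case True then show ?thesis using pred_unique u u' by blast
  next
    case False
    have "ap y \<in> Q u" "ap y \<in> Q u'" using AF1 u u' by blast+
    then show ?thesis using disjQ[OF u(1) u'(1) False] by blast
  qed
qed

lemma root_ex: "\<exists>\<rho>. (\<rho>,y) \<in> R\<^sup>* \<and> (\<forall>z. (z,\<rho>) \<notin> R)"
proof (induction "dep (ap y)" arbitrary: y rule: less_induct)
  case less
  show ?case
  proof (cases "\<exists>z. (z,y) \<in> R")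
    case False then show ?thesis by blast
  next
    case True
    then obtain z where z: "(z,y) \<in> R" by blast
    then have "dep (ap z) < dep (ap y)" using R_ap by blast
    then obtain \<rho> where "(\<rho>,z) \<in> R\<^sup>*" "\<forall>z. (z,\<rho>) \<notin> R" using less by blast
    then show ?thesis using rtrancl.rtrancl_into_rtrancl[OF _ z] by blast
  qed
qed

lemma root_uniq: "(\<rho>1,y) \<in> R\<^sup>* \<Longrightarrow> (\<rho>2,y) \<in> R\<^sup>* \<Longrightarrow> \<forall>z. (z,\<rho>1) \<notin> R \<Longrightarrow> \<forall>z. (z,\<rho>2) \<notin> R \<Longrightarrow> \<rho>1 = \<rho>2"
proof (induction "dep (ap y)" arbitrary: y rule: less_induct)
  case less
  show ?case
  proof (cases "\<rho>1 = y")
    case True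
    show ?thesis
    proof (rule ccontr)
      assume "\<rho>1 \<noteq> \<rho>2"
      then obtain p where "(p,y) \<in> R" using rt_last[OF less.prems(2)] True by blast
      then show False using less.prems(3) True by blast
    qed
  next
    case False
    then obtain p1 where p1: "(\<rho>1,p1) \<in> R\<^sup>*" "(p1,y) \<in> R" using rt_last[OF less.prems(1)] by blast
    have "\<rho>2 \<noteq> y" using less.prems(4) p1(2) by blast
    then obtain p2 where p2: "(\<rho>2,p2) \<in> R\<^sup>*" "(p2,y) \<in> R" using rt_last[OF less.prems(2)] by blast
    have "p1 = p2" using in_deg p1(2) p2(2) by blast
    moreover have "dep (ap p1) < dep (ap y)" using R_ap p1(2) by blast
    ultimately show ?thesis using less.hyps p1(1) p2(1) less.prems(3,4) by blast
  qed
qed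

lemma anc_chain_R: assumes "(a,z) \<in> R\<^sup>*" "(b,z) \<in> R\<^sup>*" shows "(a,b) \<in> R\<^sup>* \<or> (b,a) \<in> R\<^sup>*"
  using assms
proof (induction arbitrary: b rule: rtrancl_induct)
  case base then show ?case by blast
next
  case (step y z)
  show ?case
  proof (cases "b = z")
    case True
    then show ?thesis using rtrancl.rtrancl_into_rtrancl[OF step.hyps(1,2)] by blast
  next
    case False
    then obtain p where p: "(b,p) \<in> R\<^sup>*" "(p,z) \<in> R" using rt_last[OF step.prems] by blast
    then have "p = y" using in_deg step.hyps(2) by blast
    then show ?thesis using step.IH p by blast
  qed
qed

lemma fork: assumes "(y,l) \<in> R\<^sup>*"
  shows "(y,m) \<in> R\<^sup>* \<longrightarrow> (l,m) \<in> R\<^sup>* \<or> (m,l) \<in> R\<^sup>* \<or>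
    (\<exists>n l' m'. (n,l') \<in> R \<and> (n,m') \<in> R \<and> l' \<noteq> m' \<and> (l',l) \<in> R\<^sup>* \<and> (m',m) \<in> R\<^sup>*)"
  using assms
proof (induction rule: converse_rtrancl_induct)
  case base then show ?case by blast
next
  case (step y k)
  show ?case
  proof
    assume ym: "(y,m) \<in> R\<^sup>*"
    show "(l,m) \<in> R\<^sup>* \<or> (m,l) \<in> R\<^sup>* \<or>
      (\<exists>n l' m'. (n,l') \<in> R \<and> (n,m') \<in> R \<and> l' \<noteq> m' \<and> (l',l) \<in> R\<^sup>* \<and> (m',m) \<in> R\<^sup>*)"
    proof (cases "y = m")
      case True
      then have "(m,l) \<in> R\<^sup>*" using converse_rtrancl_into_rtrancl[OF step.hyps(1,2)] by simp
      then show ?thesis by blast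
    next
      case False
      then obtain k' where k': "(y,k') \<in> R" "(k',m) \<in> R\<^sup>*" using rt_first[OF ym] by blast
      show ?thesis
      proof (cases "k' = k")
        case True then show ?thesis using step.IH k' by blast
      next
        case False
        then show ?thesis using step.hyps k' by blast
      qed
    qed
  qed
qed

end


context prob begin

lemma Bset_F: "Bset E r F a \<subseteq> F" unfolding Bset_def by blast

lemma vu_props: assumes u: "u \<in> U"
  shows "anc (vu E r F u) (tu u) \<and> covers E (Bset E r F (vu E r F u)) (Pl E u) \<and>
     (\<forall>x. anc x (tu u) \<and> covers E (Bset E r F x) (Pl E u) \<longrightarrow> dep x \<le> dep (vu E r F u))"
proof -
  define t where "t = tu u"
  have tV: "t \<in> V" using tu_V[OF u] by (simp add: t_def)
  define Pr where "Pr v \<longleftrightarrow> anc v t \<and> covers E (Bset E r F v) (Pl E u)" for v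
  have BF: "Bset E r F r = F" unfolding Bset_def using anc_r ap_V by blast
  have PE: "Pl E u \<subseteq> E" using Pl_sub_E conjunct1[OF U_link[OF u]] by blast
  have FE: "(\<Union>l\<in>F. Pl E l) = E" using sol unfolding wtap_solution_def by blast
  have Pr_r: "Pr r" unfolding Pr_def covers_def BF using anc_r[OF tV] PE FE by blast
  define X where "X = {v. Pr v}"
  have fin: "finite X" unfolding X_def Pr_def ancestor_def by (rule finite_subset[of _ "set (P t)"]) auto
  have ne: "r \<in> X" using Pr_r by (simp add: X_def)
  define d where "d = Max (dep ` X)"
  have "d \<in> dep ` X" unfolding d_def using fin ne by (intro Max_in) auto
  then obtain m where m: "m \<in> X" "dep m = d" by blast
  have mx: "\<And>c. c \<in> X \<Longrightarrow> dep c \<le> dep m" using fin m unfolding d_def by auto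
  have ex1: "\<exists>!v. Pr v \<and> (\<forall>x. Pr x \<longrightarrow> dep x \<le> dep v)"
  proof (rule ex1I)
    show "Pr m \<and> (\<forall>x. Pr x \<longrightarrow> dep x \<le> dep m)" using m mx by (auto simp: X_def)
  next
    fix v assume v: "Pr v \<and> (\<forall>x. Pr x \<longrightarrow> dep x \<le> dep v)"
    have "Pr m" using m by (simp add: X_def)
    then have "dep m \<le> dep v" "dep v \<le> dep m" using v mx[of v] by (auto simp: X_def)
    then show "v = m" using anc_dep_eq[OF tV] v \<open>Pr m\<close> unfolding Pr_def by (metis le_antisym)
  qed
  have "vu E r F u = (THE v. Pr v \<and> (\<forall>x. Pr x \<longrightarrow> dep x \<le> dep v))"
    unfolding vu_def Pr_def t_def by (rule arg_cong[where f=The]) (rule ext, blast)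
  then have "Pr (vu E r F u) \<and> (\<forall>x. Pr x \<longrightarrow> dep x \<le> dep (vu E r F u))"
    using theI'[OF ex1] by simp
  then show ?thesis unfolding Pr_def t_def by blast
qed

lemma coverage: assumes kl: "(k,l) \<in> R\<^sup>*" and lF: "l \<in> F" and xl: "x \<in> Vl E l"
  shows "\<forall>w. anc (ap k) w \<and> w \<noteq> ap k \<and> anc w x \<longrightarrow> (\<exists>\<rho>\<in>F. anc (ap k) (ap \<rho>) \<and> w \<in> Q \<rho>)"
  using kl
proof (induction rule: converse_rtrancl_induct)
  case base
  show ?case
  proof (intro allI impI)
    fix w assume w: "anc (ap l) w \<and> w \<noteq> ap l \<and> anc w x"
    then have "w \<in> Q l" using K1[OF lF xl] by blast
    then show "\<exists>\<rho>\<in>F. anc (ap l) (ap \<rho>) \<and> w \<in> Q \<rho>" using lF anc_refl[OF ap_V[OF lF]] by blast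
  qed
next
  case (step k k')
  have xV: "x \<in> V" using Vl_props[OF lF xl] by blast
  have k'F: "k' \<in> F" using Rs_F2[OF step.hyps(2) lF] .
  have kF: "k \<in> F" using R_F step.hyps(1) by blast
  have k'x: "anc (ap k') x" using anc_trans[OF xV Rs_ap[OF step.hyps(2) lF]] Vl_props[OF lF xl] by blast
  have kk': "anc (ap k) (ap k')" using R_ap[OF step.hyps(1)] by blast
  obtain u where u: "u \<in> U" "(k,k') \<in> Au E r Fs u" using R_iff step.hyps(1) by blast
  have k'Q: "ap k' \<in> Q k" using AF2[OF u] .
  have k'V: "ap k' \<in> Vl E k" using Q_props[OF kF k'Q] by blast
  show ?case
  proof (intro allI impI)
    fix w assume w: "anc (ap k) w \<and> w \<noteq> ap k \<and> anc w x"
    show "\<exists>\<rho>\<in>F. anc (ap k) (ap \<rho>) \<and> w \<in> Q \<rho>"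
    proof (cases "anc (ap k') w \<and> w \<noteq> ap k'")
      case True
      then obtain \<rho> where \<rho>: "\<rho> \<in> F" "anc (ap k') (ap \<rho>)" "w \<in> Q \<rho>" using step.IH w by blast
      then have "anc (ap k) (ap \<rho>)" using anc_trans[OF ap_V[OF \<rho>(1)] kk'] by blast
      then show ?thesis using \<rho> by blast
    next
      case False
      have "anc w (ap k')"
      proof (cases "w = ap k'")
        case True then show ?thesis using anc_refl ap_V[OF k'F] by simp
      next
        case False
        then show ?thesis using \<open>\<not> (anc (ap k') w \<and> w \<noteq> ap k')\<close> anc_comp[OF xV k'x] w by blast
      qed
      then have "w \<in> Q k" using K1[OF kF k'V] w by blast
      then show ?thesis using kF anc_refl[OF ap_V[OF kF]] by blast
    qed
  qed
qed

lemma main_M: assumes u: "u \<in> U" and u': "u' \<in> U" and uu: "u \<noteq> u'"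
  and a1: "(n,l') \<in> Au E r Fs u" and a2: "(n,m') \<in> Au E r Fs u'"
  and R1: "(l',l) \<in> R\<^sup>*" and lF: "l \<in> F" and xl: "x \<in> Vl E l"
  and aa: "anc (ap l') (ap m')" and ne: "ap l' \<noteq> ap m'" and a'x: "anc (ap m') x"
  shows False
proof -
  define a where "a = ap l'"
  define a' where "a' = ap m'"
  define t' where "t' = tu u'"
  define b' where "b' = bu u'"
  have nFs: "n \<in> Fs u'" and m'Fs: "m' \<in> Fs u'" using a2 unfolding Au_def by auto
  have l'F: "l' \<in> F" using a1 Fs_link u unfolding Au_def by auto
  have m'F: "m' \<in> F" using Fs_link u' m'Fs by blast
  have nF: "n \<in> F" using Fs_link u' nFs by blast
  have xV: "x \<in> V" using Vl_props[OF lF xl] by blast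
  have aQ: "a \<in> Q u" using AF1[OF u a1] by (simp add: a_def)
  have a'Q: "a' \<in> Q u'" using AF1[OF u' a2] by (simp add: a'_def)
  have q': "anc t' a'" "a' \<noteq> t'" "anc a' b'" using Qu_char[OF u'] a'Q by (auto simp: t'_def b'_def)
  have aV: "a \<in> V" and a'V: "a' \<in> V" using ap_V l'F m'F by (auto simp: a_def a'_def)
  have t'V: "t' \<in> V" and b'V: "b' \<in> V" using tu_V[OF u'] bu_V[OF u'] by (auto simp: t'_def b'_def)
  have aa2: "anc a a'" using aa by (simp add: a_def a'_def)
  have ne2: "a \<noteq> a'" using ne by (simp add: a_def a'_def)
  have dQ: "Q u \<inter> Q u' = {}" using disjQ[OF u u' uu] .
  have s1: "anc a t'"
  proof (rule ccontr)
    assume na: "\<not> anc a t'"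
    then have ta: "anc t' a" using anc_comp[OF a'V aa2 q'(1)] by blast
    have "t' \<noteq> a" using na anc_refl[OF t'V] by blast
    moreover have "anc a b'" using anc_trans[OF b'V aa2 q'(3)] .
    ultimately have "a \<in> Q u'" using Qu_char[OF u'] ta by (simp add: t'_def b'_def)
    then show False using aQ dQ by blast
  qed
  have naq: "anc (ap n) a \<and> ap n \<noteq> a" using Q_props[OF nF AF2[OF u a1]] unfolding a_def by auto
  have vn: "anc (vu E r F u') (ap n)" using Fs_vu[OF u' nFs] .
  have va: "anc (vu E r F u') a" using anc_trans[OF aV vn] naq by blast
  have vne: "vu E r F u' \<noteq> a"
  proof
    assume "vu E r F u' = a"
    then have "anc a (ap n)" using vn by simp
    then show False using anc_antisym[OF aV] naq by blast
  qed
  have s2: "dep (vu E r F u') < dep a" using anc_less[OF aV va vne] .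
  have s3: "Q u' \<subseteq> \<Union>(Q ` Bset E r F a)"
  proof
    fix w assume wQ: "w \<in> Q u'"
    have wq: "anc t' w" "w \<noteq> t'" "anc w b'" using Qu_char[OF u'] wQ by (auto simp: t'_def b'_def)
    have wV: "w \<in> V" using anc_V[OF b'V wq(3)] .
    obtain l2 where l2: "l2 \<in> Fs u'" "w \<in> Q l2" using Fs_cov[OF u'] wQ by blast
    have l2F: "l2 \<in> F" using Fs_link u' l2 by blast
    show "w \<in> \<Union>(Q ` Bset E r F a)"
    proof (cases "anc a (ap l2)")
      case True
      then have "l2 \<in> Bset E r F a" using l2F by (simp add: Bset_def)
      then show ?thesis using l2 by blast
    next
      case False
      have lw: "anc (ap l2) w" "ap l2 \<noteq> w" "w \<in> Vl E l2" using Q_props[OF l2F l2(2)] by auto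
      have aw: "anc a w" using anc_trans[OF wV s1 wq(1)] .
      have la: "anc (ap l2) a" using anc_comp[OF wV lw(1) aw] False by blast
      have wa: "w \<noteq> a"
      proof
        assume "w = a"
        then have "anc w t'" using s1 by simp
        then show False using anc_antisym[OF t'V _ wq(1)] wq(2) by blast
      qed
      show ?thesis
      proof (cases "anc w a'")
        case True
        have "anc w x" using anc_trans[OF xV True] a'x by (simp add: a'_def)
        then obtain \<rho> where \<rho>: "\<rho> \<in> F" "anc a (ap \<rho>)" "w \<in> Q \<rho>"
          using coverage[OF R1 lF xl] aw wa by (auto simp: a_def)
        then have "\<rho> \<in> Bset E r F a" by (simp add: Bset_def)
        then show ?thesis using \<rho> by blast
      next
        case False
        have a'w: "anc a' w" using anc_comp[OF b'V q'(3) wq(3)] False by blast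
        have a'wne: "a' \<noteq> w" using False anc_refl[OF wV] by blast
        obtain z where z: "z \<in> Xc u' m'" using Xc_ne[OF u' m'Fs] by blast
        have zQ: "z \<in> Q m'" using Xc_Ql[OF u' z] .
        have zb: "anc z b'" using Xc_anc[OF u' z] by (simp add: b'_def)
        have zp: "anc a' z" "z \<noteq> a'" "z \<in> Vl E m'" using Q_props[OF m'F zQ] by (auto simp: a'_def)
        have zV: "z \<in> V" using anc_V[OF b'V zb] .
        have lm: "l2 \<noteq> m'"
        proof
          assume "l2 = m'"
          then have "anc a' a" using la by (simp add: a'_def)
          then show False using anc_antisym[OF a'V aa2] ne2 by blast
        qed
        have znl: "z \<notin> Q l2" using Xc_other[OF z l2(1) lm] .
        show ?thesis
        proof (cases "anc z w")
          case True
          have az: "anc a z" using anc_trans[OF zV aa2 zp(1)] .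
          have lz: "anc (ap l2) z" using anc_trans[OF zV la az] .
          have zl: "z \<noteq> ap l2"
          proof
            assume "z = ap l2"
            then have "anc z a'" using anc_trans[OF a'V la aa2] by simp
            then show False using anc_antisym[OF zV zp(1)] zp(2) by blast
          qed
          have "z \<in> Q l2" using K1[OF l2F lw(3) lz zl True] .
          then show ?thesis using znl by blast
        next
          case False
          have wz: "anc w z" using anc_comp[OF b'V wq(3) zb] False by blast
          have "w \<in> Q m'" using K1[OF m'F zp(3)] a'w a'wne wz by (simp add: a'_def)
          moreover have "m' \<in> Bset E r F a" using m'F aa2 by (simp add: Bset_def a'_def)
          ultimately show ?thesis by blast
        qed
      qed
    qed
  qed
  have "covers E (Bset E r F a) (Pl E u')"
    using covers_iff[OF conjunct1[OF U_link[OF u']] Bset_F] s3 by simp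
  then have "dep a \<le> dep (vu E r F u')" using vu_props[OF u'] s1 by (simp add: t'_def)
  then show False using s2 by simp
qed

end


context prob begin

lemma comp_root: assumes x0: "x0 \<in> F" and r0: "(\<rho>0,x0) \<in> R\<^sup>*" "\<forall>z. (z,\<rho>0) \<notin> R"
  and p: "(x0,y) \<in> (R \<union> R\<inverse>)\<^sup>*" shows "y \<in> F \<and> (\<rho>0,y) \<in> R\<^sup>*"
  using p
proof (induction rule: rtrancl_induct)
  case base then show ?case using x0 r0 by blast
next
  case (step y z)
  show ?case
  proof (cases "(y,z) \<in> R")
    case True
    have "z \<in> F" using R_F[OF True] by blast
    moreover have "(\<rho>0,z) \<in> R\<^sup>*" using rtrancl.rtrancl_into_rtrancl[OF conjunct2[OF step.IH] True] .
    ultimately show ?thesis by blast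
  next
    case False
    then have zy: "(z,y) \<in> R" using step.hyps(2) by blast
    have zF: "z \<in> F" using R_F[OF zy] by blast
    obtain \<rho> where \<rho>: "(\<rho>,z) \<in> R\<^sup>*" "\<forall>w. (w,\<rho>) \<notin> R" using root_ex by blast
    have "(\<rho>,y) \<in> R\<^sup>*" using rtrancl.rtrancl_into_rtrancl[OF \<rho>(1) zy] .
    then have "\<rho> = \<rho>0" using root_uniq[OF _ conjunct2[OF step.IH] \<rho>(2) r0(2)] by blast
    then show ?thesis using zF \<rho> by blast
  qed
qed

lemma chainS: assumes r0: "\<forall>y\<in>C. (\<rho>0,y) \<in> R\<^sup>*" and lC: "l \<in> C" and mC: "m \<in> C" and CF: "C \<subseteq> F"
  and xl: "x \<in> Vl E l" and xm: "x \<in> Vl E m"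
  shows "(l,m) \<in> R\<^sup>* \<or> (m,l) \<in> R\<^sup>*"
proof (rule ccontr)
  assume nc: "\<not> ((l,m) \<in> R\<^sup>* \<or> (m,l) \<in> R\<^sup>*)"
  have lF: "l \<in> F" and mF: "m \<in> F" using lC mC CF by auto
  have xV: "x \<in> V" using Vl_props[OF lF xl] by blast
  have r0m: "(\<rho>0,m) \<in> R\<^sup>*" using r0 mC by blast
  have fk: "(l,m) \<in> R\<^sup>* \<or> (m,l) \<in> R\<^sup>* \<or> (\<exists>n l' m'. (n,l') \<in> R \<and> (n,m') \<in> R \<and> l' \<noteq> m' \<and> (l',l) \<in> R\<^sup>* \<and> (m',m) \<in> R\<^sup>*)"
    using mp[OF fork[OF r0[rule_format, OF lC]] r0m] .
  have "\<exists>n l' m'. (n,l') \<in> R \<and> (n,m') \<in> R \<and> l' \<noteq> m' \<and> (l',l) \<in> R\<^sup>* \<and> (m',m) \<in> R\<^sup>*"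
    using fk nc by (simp only: de_Morgan_disj) blast
  then obtain n l' m' where f: "(n,l') \<in> R" "(n,m') \<in> R" "l' \<noteq> m'" "(l',l) \<in> R\<^sup>*" "(m',m) \<in> R\<^sup>*"
    by blast
  obtain u where u: "u \<in> U" "(n,l') \<in> Au E r Fs u" using R_iff f(1) by blast
  obtain u' where u': "u' \<in> U" "(n,m') \<in> Au E r Fs u'" using R_iff f(2) by blast
  have uu: "u \<noteq> u'"
  proof
    assume "u = u'"
    then have "(n,m') \<in> Au E r Fs u" using u'(2) by simp
    then have "l' = m'" using succ_unique[OF u(1) u(2)] by blast
    then show False using f(3) by blast
  qed
  have ax: "anc (ap l') x" using anc_trans[OF xV Rs_ap[OF f(4) lF]] Vl_props[OF lF xl] by blast
  have a'x: "anc (ap m') x" using anc_trans[OF xV Rs_ap[OF f(5) mF]] Vl_props[OF mF xm] by blast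
  have "ap l' \<in> Q u" "ap m' \<in> Q u'" using AF1[OF u(1) u(2)] AF1[OF u'(1) u'(2)] by auto
  then have ne: "ap l' \<noteq> ap m'" using disjQ[OF u(1) u'(1) uu] by auto
  show False
  proof (cases "anc (ap l') (ap m')")
    case True
    show False using main_M[OF u(1) u'(1) uu u(2) u'(2) f(4) lF xl True ne a'x] .
  next
    case False
    then have "anc (ap m') (ap l')" using anc_comp[OF xV ax a'x] by blast
    moreover have "u' \<noteq> u" using uu by (rule not_sym)
    moreover have "ap m' \<noteq> ap l'" using ne by (rule not_sym)
    ultimately show False using main_M[OF u'(1) u(1) _ u'(2) u(2) f(5) mF xm _ _ ax] by metis
  qed
qed

lemma walk_R: "walk y as z \<Longrightarrow> set as \<subseteq> D \<Longrightarrow> w \<in> set (nodes y as) \<Longrightarrow> (y,w) \<in> R\<^sup>* \<and> (w,z) \<in> R\<^sup>*"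
proof (induction as arbitrary: y w)
  case Nil then show ?case by (simp add: nodes_def)
next
  case (Cons a as)
  obtain u y0 y' where a: "a = (u,y0,y')" by (cases a) auto
  have y0: "y0 = y" and wk: "walk y' as z" using Cons.prems(1) a by auto
  have aD: "(u,y,y') \<in> D" using Cons.prems(2) a y0 by auto
  have yy': "(y,y') \<in> R" using D_R[OF aD] by blast
  have IH: "\<And>w. w \<in> set (nodes y' as) \<Longrightarrow> (y',w) \<in> R\<^sup>* \<and> (w,z) \<in> R\<^sup>*"
    using Cons.IH wk Cons.prems(2) by auto
  have y'z: "(y',z) \<in> R\<^sup>*" using IH[of y'] by (simp add: nodes_def)
  show ?case
  proof (cases "w = y")
    case True
    then show ?thesis using converse_rtrancl_into_rtrancl[OF yy' y'z] by simp
  next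
    case False
    then have "w \<in> set (nodes y' as)" using Cons.prems(3) a by (auto simp: nodes_def)
    then show ?thesis using IH converse_rtrancl_into_rtrancl[OF yy'] by blast
  qed
qed

lemma walk_on: "walk y as z \<Longrightarrow> set as \<subseteq> D \<Longrightarrow> (y,w) \<in> R\<^sup>* \<Longrightarrow> (w,z) \<in> R\<^sup>* \<Longrightarrow> w \<in> set (nodes y as)"
proof (induction as arbitrary: z rule: rev_induct)
  case Nil
  then have "y = z" by simp
  then have "w = y" using Rs_antisym Nil.prems by blast
  then show ?case by (simp add: nodes_def)
next
  case (snoc a bs)
  obtain u p z' where a: "a = (u,p,z')" by (cases a) auto
  have "walk y bs p \<and> z' = z" using walk_snoc[of y bs a z] snoc.prems(1) a by simp
  then have wk: "walk y bs p" and zz: "z' = z" by auto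
  have aD: "(u,p,z) \<in> D" using snoc.prems(2) a zz by auto
  have pz: "(p,z) \<in> R" using D_R[OF aD] by blast
  show ?case
  proof (cases "w = z")
    case True then show ?thesis using a zz by (simp add: nodes_snoc)
  next
    case False
    then obtain q where q: "(w,q) \<in> R\<^sup>*" "(q,z) \<in> R" using rt_last[OF snoc.prems(4)] by blast
    then have "q = p" using in_deg pz by blast
    then have "w \<in> set (nodes y bs)" using snoc.IH[OF wk] snoc.prems(2,3) q by auto
    then show ?thesis by (simp add: nodes_snoc)
  qed
qed

lemma walk_distinct: "walk y as z \<Longrightarrow> set as \<subseteq> D \<Longrightarrow> distinct (nodes y as)"
proof (induction as arbitrary: y)
  case Nil then show ?case by (simp add: nodes_def)
next
  case (Cons a as)
  obtain u y0 y' where a: "a = (u,y0,y')" by (cases a) auto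
  have y0: "y0 = y" and wk: "walk y' as z" using Cons.prems(1) a by auto
  have aD: "(u,y,y') \<in> D" using Cons.prems(2) a y0 by auto
  have yy': "(y,y') \<in> R" using D_R[OF aD] by blast
  have d: "distinct (nodes y' as)" using Cons.IH wk Cons.prems(2) by auto
  have "y \<notin> set (nodes y' as)"
  proof
    assume "y \<in> set (nodes y' as)"
    then have "(y',y) \<in> R\<^sup>*" using walk_R wk Cons.prems(2) by auto
    then have "(y,y) \<in> R\<^sup>+" using yy' by (meson rtrancl_into_trancl2)
    then show False using Rp_dep by fastforce
  qed
  moreover have "nodes y (a # as) = y # nodes y' as" using a by (simp add: nodes_def)
  ultimately show ?case using d by simp
qed

lemma inj_core: assumes u: "u \<in> U" and a1: "(l1,t1) \<in> Au E r Fs u" and a2: "(l2,t2) \<in> Au E r Fs u"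
  and ne: "l1 \<noteq> l2" and l12: "(l1,l2) \<in> R\<^sup>*" and t1m: "(t1,m) \<in> R\<^sup>*" and l2m: "(l2,m) \<in> R\<^sup>*"
  and t2m: "(t2,m) \<in> R\<^sup>*" and mF: "m \<in> F" and x1: "x \<in> Vl E l1" and xm: "x \<in> Vl E m"
  shows False
proof -
  have l1Fs: "l1 \<in> Fs u" and l2Fs: "l2 \<in> Fs u" using a1 a2 unfolding Au_def by auto
  have l1F: "l1 \<in> F" and l2F: "l2 \<in> F" using l1Fs l2Fs Fs_link u by auto
  have xV: "x \<in> V" using Vl_props[OF mF xm] by blast
  have R1: "(l1,t1) \<in> R" using R_iff u a1 by blast
  have t1l2: "(t1,l2) \<in> R\<^sup>*"
  proof -
    have "(t1,l2) \<in> R\<^sup>* \<or> (l2,t1) \<in> R\<^sup>*" using anc_chain_R[OF t1m l2m] .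
    moreover have "(l2,t1) \<in> R\<^sup>* \<Longrightarrow> (t1,l2) \<in> R\<^sup>*"
    proof -
      assume h: "(l2,t1) \<in> R\<^sup>*"
      show "(t1,l2) \<in> R\<^sup>*"
      proof (cases "l2 = t1")
        case True then show ?thesis by simp
      next
        case False
        then obtain p where p: "(l2,p) \<in> R\<^sup>*" "(p,t1) \<in> R" using rt_last[OF h] by blast
        then have "p = l1" using in_deg R1 by blast
        then have "l1 = l2" using Rs_antisym l12 p(1) by blast
        then show ?thesis using ne by blast
      qed
    qed
    ultimately show ?thesis by blast
  qed
  obtain q where q: "q \<in> Xc u l2" using Xc_ne[OF u l2Fs] by blast
  have qt2: "anc q (ap t2)" using AF3[OF u a2 q] .
  have t2F: "t2 \<in> F" using a2 Fs_link u unfolding Au_def by auto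
  have "anc (ap t2) (ap m)" using Rs_ap[OF t2m mF] .
  moreover have "anc (ap m) x" using Vl_props[OF mF xm] by blast
  ultimately have t2x: "anc (ap t2) x" using anc_trans[OF xV] by blast
  have qx: "anc q x" using anc_trans[OF xV qt2 t2x] .
  have qQ: "q \<in> Q l2" using Xc_Ql[OF u q] .
  have qp: "anc (ap l2) q" "q \<noteq> ap l2" "q \<in> V" using Q_props[OF l2F qQ] by auto
  have at1: "anc (ap l1) (ap t1)" "dep (ap l1) < dep (ap t1)" using arc_ap[OF u a1] by auto
  have t1l2a: "anc (ap t1) (ap l2)" using Rs_ap[OF t1l2 l2F] .
  have "dep (ap t1) \<le> dep (ap l2)" using Rs_dep[OF t1l2] .
  moreover have "dep (ap l2) < dep q" using anc_less[OF qp(3) qp(1) qp(2)[symmetric]] .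
  ultimately have dq: "dep (ap l1) < dep q" using at1(2) by simp
  have aq: "anc (ap l1) q" using anc_trans[OF qp(3) at1(1) anc_trans[OF qp(3) t1l2a qp(1)]] .
  have "q \<noteq> ap l1" using dq by auto
  then have "q \<in> Q l1" using K1[OF l1F x1 aq _ qx] by blast
  then show False using Xc_other[OF q l1Fs ne] by blast
qed

end


context prob begin

lemma L_finite: "finite L"
proof -
  have fV: "finite V" using tree unfolding is_tree_def by blast
  have "L \<subseteq> Pow V"
  proof
    fix l assume "l \<in> L"
    then obtain s t where "l = {s,t}" "s \<in> V" "t \<in> V" using links link_obtain by metis
    then show "l \<in> Pow V" by simp
  qed
  then show ?thesis using fV finite_subset by blast
qed

lemma F_finite: "finite F" using L_finite F_L finite_subset by blast

theorem main_thin: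
  assumes comp: "weak_component F D C"
    and paths: "\<forall>as. dipath (comp_arcs D C) as \<longrightarrow> card {u\<in>U. \<exists>a\<in>set as. fst a = u} \<le> k"
  shows "thin V E (k + 1) C"
proof -
  obtain x0 where x0: "x0 \<in> F" and Cdef: "C = {y\<in>F. (x0,y) \<in> (R \<union> R\<inverse>)\<^sup>*}"
    using comp unfolding weak_component_def by blast
  obtain \<rho>0 where \<rho>0: "(\<rho>0,x0) \<in> R\<^sup>*" "\<forall>z. (z,\<rho>0) \<notin> R" using root_ex by blast
  have CF: "C \<subseteq> F" using Cdef by blast
  have r0: "\<forall>y\<in>C. (\<rho>0,y) \<in> R\<^sup>*" using comp_root[OF x0 \<rho>0] Cdef by blast
  have \<rho>0F: "\<rho>0 \<in> F" using Rs_F2[OF \<rho>0(1) x0] .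
  have inC: "\<And>y. (\<rho>0,y) \<in> R\<^sup>* \<Longrightarrow> y \<in> C"
  proof -
    fix y assume y: "(\<rho>0,y) \<in> R\<^sup>*"
    have yF: "y \<in> F" using Rs_F[OF y \<rho>0F] .
    have "(x0,\<rho>0) \<in> (R\<inverse>)\<^sup>*" using \<rho>0(1) by (simp add: rtrancl_converse)
    then have 1: "(x0,\<rho>0) \<in> (R \<union> R\<inverse>)\<^sup>*" using rtrancl_mono[of "R\<inverse>" "R \<union> R\<inverse>"] by blast
    have 2: "(\<rho>0,y) \<in> (R \<union> R\<inverse>)\<^sup>*" using y rtrancl_mono[of R "R \<union> R\<inverse>"] by blast
    have "(x0,y) \<in> (R \<union> R\<inverse>)\<^sup>*" using rtrancl_trans[OF 1 2] .
    then show "y \<in> C" using Cdef yF by blast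
  qed
  have fC: "finite C" using F_finite CF finite_subset by blast
  show ?thesis unfolding thin_def
  proof (intro ballI)
    fix x assume xV: "x \<in> V"
    define S where "S = {l\<in>C. x \<in> Vl E l}"
    have fS: "finite S" using fC by (simp add: S_def)
    have SC: "S \<subseteq> C" by (auto simp: S_def)
    show "card {l\<in>C. x \<in> Vl E l} \<le> k + 1"
    proof (cases "S = {}")
      case True then show ?thesis by (simp add: S_def[symmetric])
    next
      case False
      define dmin where "dmin = Min ((\<lambda>l. dep (ap l)) ` S)"
      have "dmin \<in> (\<lambda>l. dep (ap l)) ` S" unfolding dmin_def using fS False by (intro Min_in) auto
      then obtain l0 where l0: "l0 \<in> S" "dep (ap l0) = dmin" by blast
      have l0min: "\<And>l. l \<in> S \<Longrightarrow> dep (ap l0) \<le> dep (ap l)" using fS l0 unfolding dmin_def by auto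
      define dmax where "dmax = Max ((\<lambda>l. dep (ap l)) ` S)"
      have "dmax \<in> (\<lambda>l. dep (ap l)) ` S" unfolding dmax_def using fS False by (intro Max_in) auto
      then obtain \<mu> where \<mu>: "\<mu> \<in> S" "dep (ap \<mu>) = dmax" by blast
      have \<mu>max: "\<And>l. l \<in> S \<Longrightarrow> dep (ap l) \<le> dep (ap \<mu>)" using fS \<mu> unfolding dmax_def by auto
      have chS: "\<And>l m. l \<in> S \<Longrightarrow> m \<in> S \<Longrightarrow> (l,m) \<in> R\<^sup>* \<or> (m,l) \<in> R\<^sup>*"
        using chainS[OF r0 _ _ CF] by (auto simp: S_def)
      have sl0: "\<And>l. l \<in> S \<Longrightarrow> (l0,l) \<in> R\<^sup>*"
      proof -
        fix l assume l: "l \<in> S"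
        show "(l0,l) \<in> R\<^sup>*"
        proof (cases "(l0,l) \<in> R\<^sup>*")
          case False
          then have h: "(l,l0) \<in> R\<^sup>*" using chS[OF l0(1) l] by blast
          show ?thesis
          proof (cases "l = l0")
            case False
            then have "(l,l0) \<in> R\<^sup>+" using rtranclD[OF h] by blast
            then have "dep (ap l) < dep (ap l0)" by (rule Rp_dep)
            then show ?thesis using l0min[OF l] by simp
          qed simp
        qed
      qed
      have s\<mu>: "\<And>l. l \<in> S \<Longrightarrow> (l,\<mu>) \<in> R\<^sup>*"
      proof -
        fix l assume l: "l \<in> S"
        show "(l,\<mu>) \<in> R\<^sup>*"
        proof (cases "(l,\<mu>) \<in> R\<^sup>*")
          case False
          then have h: "(\<mu>,l) \<in> R\<^sup>*" using chS[OF \<mu>(1) l] by blast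
          show ?thesis
          proof (cases "l = \<mu>")
            case False
            then have "(\<mu>,l) \<in> R\<^sup>+" using rtranclD[OF h] by blast
            then have "dep (ap \<mu>) < dep (ap l)" by (rule Rp_dep)
            then show ?thesis using \<mu>max[OF l] by simp
          qed simp
        qed
      qed
      show ?thesis
      proof (cases "l0 = \<mu>")
        case True
        have "S \<subseteq> {l0}"
        proof
          fix l assume l: "l \<in> S"
          have "l = l0" using Rs_antisym[OF s\<mu>[OF l]] sl0[OF l] True by simp
          then show "l \<in> {l0}" by simp
        qed
        then have "card S \<le> 1" using card_mono[of "{l0}" S] by simp
        then show ?thesis by (simp add: S_def[symmetric])
      next
        case ne: False
        obtain as where wk: "walk l0 as \<mu>" and asD: "set as \<subseteq> D"
          using walk_ex[OF s\<mu>[OF l0(1)]] by blast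
        have asne: "as \<noteq> []" using wk ne by (cases as) auto
        have nodesC: "\<And>w. w \<in> set (nodes l0 as) \<Longrightarrow> w \<in> C"
        proof -
          fix w assume "w \<in> set (nodes l0 as)"
          then have "(l0,w) \<in> R\<^sup>*" using walk_R[OF wk asD] by blast
          moreover have "(\<rho>0,l0) \<in> R\<^sup>*" using r0 l0(1) SC by blast
          ultimately show "w \<in> C" using inC rtrancl_trans by metis
        qed
        have dp: "dipath (comp_arcs D C) as"
          unfolding dipath_def
        proof (intro conjI allI impI)
          show "as \<noteq> []" by (rule asne)
          show "set as \<subseteq> comp_arcs D C"
          proof
            fix a assume a: "a \<in> set as"
            obtain u y z where a3: "a = (u,y,z)" by (cases a) auto
            have "y \<in> C" "z \<in> C" using walk_arc_nodes[OF wk a] nodesC a3 by auto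
            moreover have "a \<in> D" using a asD by blast
            ultimately show "a \<in> comp_arcs D C" using a3 by (simp add: comp_arcs_def)
          qed
          show "\<And>i. Suc i < length as \<Longrightarrow> snd (snd (as ! i)) = fst (snd (as ! Suc i))"
            using walk_consec[OF wk] by blast
          obtain a as' where aa: "as = a # as'" using asne by (cases as) auto
          have "fst (snd a) = l0" using wk aa by simp
          then have "fst (snd (hd as)) # map (\<lambda>a. snd (snd a)) as = nodes l0 as"
            using aa by (simp add: nodes_def)
          then show "distinct (fst (snd (hd as)) # map (\<lambda>a. snd (snd a)) as)"
            using walk_distinct[OF wk asD] by simp
        qed
        define Lb where "Lb = {u\<in>U. \<exists>a\<in>set as. fst a = u}"
        have cLb: "card Lb \<le> k" using paths dp by (simp add: Lb_def)
        have fLb: "finite Lb"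
        proof -
          have "Lb \<subseteq> fst ` set as" unfolding Lb_def by blast
          then show ?thesis using finite_subset by blast
        qed
        define ga where "ga l = (SOME a. a \<in> set as \<and> fst (snd a) = l)" for l
        define g where "g l = fst (ga l)" for l
        have ga: "\<And>l. l \<in> S - {\<mu>} \<Longrightarrow> ga l \<in> set as \<and> fst (snd (ga l)) = l"
        proof -
          fix l assume l: "l \<in> S - {\<mu>}"
          have "l \<in> set (nodes l0 as)" using walk_on[OF wk asD sl0[of l] s\<mu>[of l]] l by blast
          then have "\<exists>a\<in>set as. fst (snd a) = l" using walk_src[OF wk] l by blast
          then have "\<exists>a. a \<in> set as \<and> fst (snd a) = l" by blast
          then show "ga l \<in> set as \<and> fst (snd (ga l)) = l" unfolding ga_def by (rule someI_ex)
        qed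
        have gaD: "\<And>l. l \<in> S - {\<mu>} \<Longrightarrow> fst (ga l) \<in> U \<and> (l, snd (snd (ga l))) \<in> Au E r Fs (fst (ga l)) \<and> snd (snd (ga l)) \<in> set (nodes l0 as)"
        proof -
          fix l assume l: "l \<in> S - {\<mu>}"
          obtain u y z where a3: "ga l = (u,y,z)" by (cases "ga l") auto
          have "(u,y,z) \<in> D" using ga[OF l] asD a3 by auto
          moreover have "y = l" using ga[OF l] a3 by simp
          moreover have "z \<in> set (nodes l0 as)" using walk_arc_nodes[OF wk] ga[OF l] a3 by fastforce
          ultimately show "fst (ga l) \<in> U \<and> (l, snd (snd (ga l))) \<in> Au E r Fs (fst (ga l)) \<and> snd (snd (ga l)) \<in> set (nodes l0 as)"
            using D_R a3 by auto
        qed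
        have gLb: "g ` (S - {\<mu>}) \<subseteq> Lb"
        proof
          fix u assume "u \<in> g ` (S - {\<mu>})"
          then obtain l where l: "l \<in> S - {\<mu>}" "u = g l" by blast
          then show "u \<in> Lb" using gaD[OF l(1)] ga[OF l(1)] unfolding Lb_def g_def by blast
        qed
        have \<mu>F: "\<mu> \<in> F" using \<mu>(1) SC CF by blast
        have x\<mu>: "x \<in> Vl E \<mu>" using \<mu>(1) by (simp add: S_def)
        have inj: "inj_on g (S - {\<mu>})"
        proof
          fix l1 l2 assume l1: "l1 \<in> S - {\<mu>}" and l2: "l2 \<in> S - {\<mu>}" and eq: "g l1 = g l2"
          show "l1 = l2"
          proof (rule ccontr)
            assume ne12: "l1 \<noteq> l2"
            define u where "u = g l1"
            have u: "u \<in> U" using gaD[OF l1] by (simp add: u_def g_def)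
            define t1 where "t1 = snd (snd (ga l1))"
            define t2 where "t2 = snd (snd (ga l2))"
            have a1: "(l1,t1) \<in> Au E r Fs u" using gaD[OF l1] by (simp add: u_def g_def t1_def)
            have a2: "(l2,t2) \<in> Au E r Fs u" using gaD[OF l2] eq by (simp add: u_def g_def t2_def)
            have t1m: "(t1,\<mu>) \<in> R\<^sup>*" using walk_R[OF wk asD] gaD[OF l1] by (simp add: t1_def)
            have t2m: "(t2,\<mu>) \<in> R\<^sup>*" using walk_R[OF wk asD] gaD[OF l2] by (simp add: t2_def)
            have l1m: "(l1,\<mu>) \<in> R\<^sup>*" and l2m: "(l2,\<mu>) \<in> R\<^sup>*" using s\<mu> l1 l2 by auto
            have x1: "x \<in> Vl E l1" and x2: "x \<in> Vl E l2" using l1 l2 by (auto simp: S_def)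
            have "(l1,l2) \<in> R\<^sup>* \<or> (l2,l1) \<in> R\<^sup>*" using anc_chain_R[OF l1m l2m] .
            then show False
            proof
              assume h: "(l1,l2) \<in> R\<^sup>*"
              show False using inj_core[OF u a1 a2 ne12 h t1m l2m t2m \<mu>F x1 x\<mu>] .
            next
              assume h: "(l2,l1) \<in> R\<^sup>*"
              show False using inj_core[OF u a2 a1 not_sym[OF ne12] h t2m l1m t1m \<mu>F x2 x\<mu>] .
            qed
          qed
        qed
        have "card (S - {\<mu>}) \<le> card Lb" using card_inj_on_le[OF inj gLb fLb] .
        then have "card (S - {\<mu>}) \<le> k" using cLb by simp
        moreover have "card (S - {\<mu>}) = card S - 1" using card_Diff_singleton[OF \<mu>(1)] .
        moreover have "0 < card S" using fS \<mu>(1) by (auto simp add: card_gt_0_iff)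
        ultimately have "card S \<le> k + 1" by simp
        then show ?thesis by (simp add: S_def[symmetric])
      qed
    qed
  qed
qed

end

theorem lemma14:
  fixes V :: "'a set" and E :: "'a set set" and L :: "'a set set" and w :: "'a set \<Rightarrow> real"
    and r :: 'a and F :: "'a set set" and U :: "'a set set"
    and Fs :: "'a set \<Rightarrow> 'a set set" and C :: "'a set set" and k :: nat
  assumes inst: "wtap_instance V E L w"
    and root: "r \<in> V"
    and sol: "wtap_solution E L F"
    and Fsel: "valid_Fsel E r F U Fs"
    and Uup: "U \<subseteq> Lup E r L"
    and disj: "\<forall>u1\<in>U. \<forall>u2\<in>U. u1 \<noteq> u2 \<longrightarrow> Pl E u1 \<inter> Pl E u2 = {}"
    and comp: "weak_component F (dep_arcs E r Fs U) C"
    and paths: "\<forall>as. dipath (comp_arcs (dep_arcs E r Fs U) C) as \<longrightarrow>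
                  card {u\<in>U. \<exists>a\<in>set as. fst a = u} \<le> k"
  shows "thin V E (k + 1) C"
proof -
  have tr: "is_tree V E" and lk: "\<forall>l\<in>L. is_link V l" using inst unfolding wtap_instance_def by auto
  have pr: "prob V E r L F U Fs"
    using prob.intro[OF tctx.intro[OF tr root] prob_axioms.intro[OF lk sol Fsel Uup disj]] .
  show ?thesis using prob.main_thin[OF pr comp paths] .
qed


end
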